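(* Consider the inexact Bregman proximal point algorithm described in the context, with $\Phi$ Legendre, twice continuously differentiable on $\operatorname{int}\operatorname{dom}\Phi$ and very strictly convex, and $0\le\rho_k\le\rho<1$. Suppose $\operatorname{zer}T\cap\operatorname{int}\operatorname{dom}\Phi\neq\emptyset$ and that $D_\Phi(z^\star,\cdot)$ is coercive for some $z^\star\in\operatorname{dom}\Phi\cap\operatorname{zer}T$. Then $z^k$ converges to some $z^\infty\in\operatorname{zer}T\cap\operatorname{int}\operatorname{dom}\Phi$. Suppose further that the error bound condition (EB) holds at $z^\infty$ with constants $\delta,\kappa>0$. Then there exist $\varepsilon>0$ with $B_\varepsilon(z^\infty)\subseteq\operatorname{int}\operatorname{dom}\Phi$, constants $0<\theta$, $\Theta<\infty$ with $\|\nabla\Phi(a)-\nabla\Phi(b)\|\le\Theta\|a-b\|$ and $D_\Phi(a,b)\ge\frac{\theta}{2}\|a-b\|^2$ for all $a,b\in B_\varepsilon(z^\infty)$, and an index $k_0$ such that for all $k\ge k_0$ $$\tfrac{1}{C_k}\operatorname{dist}_\Phi(z^{k+1},\operatorname{zer}T)\le D_\Phi(p^k,z^k),\qquad C_k:=\Big(\sqrt{\rho_k}\tfrac{\sqrt\Theta}{\sqrt\theta}+\tfrac{\kappa}{\sigma_k}\Theta(1+\sqrt{\rho_k})\Big)^2\tfrac{\Theta}{\theta}.$$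
   Context: Let $\mathbb{E}$ be a finite-dimensional Euclidean space, $\Gamma_0(\mathbb{E})$ the proper lsc convex functions $\mathbb{E}\to\mathbb{R}\cup\{+\infty\}$. $\Phi\in\Gamma_0(\mathbb{E})$ is Legendre if it is essentially smooth ($\operatorname{int}\operatorname{dom}\Phi\ne\emptyset$, differentiable there, $\|\nabla\Phi(z^\nu)\|\to\infty$ whenever $\operatorname{int}\operatorname{dom}\Phi\ni z^\nu\to z\in\operatorname{bdry}\operatorname{dom}\Phi$) and essentially strictly convex (strictly convex on every convex subset of $\operatorname{dom}\partial\Phi$); then $\nabla\Phi:\operatorname{int}\operatorname{dom}\Phi\to\operatorname{int}\operatorname{dom}\Phi^*$ is a bijection with inverse $\nabla\Phi^*$. Very strictly convex means $\nabla^2\Phi(z)\succ0$ for all $z\in\operatorname{int}\operatorname{dom}\Phi$. $D_\Phi(z_1,z_2)=\Phi(z_1)-\Phi(z_2)-\langle\nabla\Phi(z_2),z_1-z_2\rangle$ if $z_1\in\operatorname{dom}\Phi$, $z_2\in\operatorname{int}\operatorname{dom}\Phi$, and $+\infty$ otherwise. For a closed convex set $Z$, $\operatorname{dist}_\Phi(y,Z)=\inf_{x\in Z}D_\Phi(x,y)$; $\operatorname{dist}(z,Z)$ is the Euclidean distance; $B_\varepsilon(z)$ is the closed Euclidean ball. Let $T:\mathbb{E}\rightrightarrows\mathbb{E}$ be maximal monotone, $\operatorname{zer}T=T^{-1}(0)$ (closed convex), and assume $\operatorname{int}\operatorname{dom}\Phi\cap\operatorname{dom}T\ne\emptyset$.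 Inexact Bregman proximal point algorithm: given $z^0\in\operatorname{int}\operatorname{dom}\Phi$, step sizes $\sigma_k\ge\sigma>0$ and tolerances $\rho_k\in[0,1)$, it generates triples $(z^{k+1},p^k,w^k)$ with $p^k\in\operatorname{dom}\Phi$, $w^k\in T(p^k)$, $\nabla\Phi(z^k)-\sigma_kw^k\in\operatorname{int}\operatorname{dom}\Phi^*$, $z^{k+1}=\nabla\Phi^*(\nabla\Phi(z^k)-\sigma_kw^k)\in\operatorname{int}\operatorname{dom}\Phi$, and $D_\Phi(p^k,z^{k+1})\le\rho_kD_\Phi(p^k,z^k)$. Error bound condition (EB) at $\bar z\in\operatorname{zer}T$: there exist $\delta,\kappa>0$ such that whenever $w\in T(z)$, $\|z-\bar z\|\le\delta$ and $\|w\|\le\delta$, then $\operatorname{dist}(z,\operatorname{zer}T)\le\kappa\|w\|$. A function $h$ is coercive if $h(z)\to\infty$ as $\|z\|\to\infty$. *)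

theory Defs
  imports "HOL-Analysis.Analysis"
begin

definition edom :: "('a \<Rightarrow> ereal) \<Rightarrow> 'a set" where
  "edom \<Phi> = {x. \<Phi> x < \<infinity>}"

definition proper_fun :: "('a \<Rightarrow> ereal) \<Rightarrow> bool" where
  "proper_fun \<Phi> \<longleftrightarrow> (\<forall>x. \<Phi> x \<noteq> -\<infinity>) \<and> edom \<Phi> \<noteq> {}"

definition lsc_fun :: "('a::topological_space \<Rightarrow> ereal) \<Rightarrow> bool" where
  "lsc_fun \<Phi> \<longleftrightarrow> (\<forall>x. \<Phi> x \<le> Liminf (at x) \<Phi>)"

definition convex_efun :: "('a::real_vector \<Rightarrow> ereal) \<Rightarrow> bool" where
  "convex_efun \<Phi> \<longleftrightarrow> (\<forall>x y t. 0 < t \<and> t < 1 \<longrightarrow>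
     \<Phi> (t *\<^sub>R x + (1 - t) *\<^sub>R y) \<le> ereal t * \<Phi> x + ereal (1 - t) * \<Phi> y)"

definition Gamma0 :: "('a::real_normed_vector \<Rightarrow> ereal) \<Rightarrow> bool" where
  "Gamma0 \<Phi> \<longleftrightarrow> proper_fun \<Phi> \<and> lsc_fun \<Phi> \<and> convex_efun \<Phi>"

text \<open>Real part of \<Phi> (meaningful where \<Phi> is finite).\<close>
definition rfun :: "('a \<Rightarrow> ereal) \<Rightarrow> 'a \<Rightarrow> real" where
  "rfun \<Phi> x = real_of_ereal (\<Phi> x)"

definition grad :: "('a::real_inner \<Rightarrow> real) \<Rightarrow> 'a \<Rightarrow> 'a" where
  "grad f z = (SOME g. (f has_derivative (\<lambda>h. g \<bullet> h)) (at z))"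

definition egrad :: "('a::real_inner \<Rightarrow> ereal) \<Rightarrow> 'a \<Rightarrow> 'a" where
  "egrad \<Phi> z = grad (rfun \<Phi>) z"

definition ediff_at :: "('a::real_inner \<Rightarrow> ereal) \<Rightarrow> 'a \<Rightarrow> bool" where
  "ediff_at \<Phi> z \<longleftrightarrow> (\<exists>g. (rfun \<Phi> has_derivative (\<lambda>h. g \<bullet> h)) (at z))"

definition conj_fun :: "('a::real_inner \<Rightarrow> ereal) \<Rightarrow> 'a \<Rightarrow> ereal" where
  "conj_fun \<Phi> y = (SUP x. ereal (x \<bullet> y) - \<Phi> x)"

definition subdiff :: "('a::real_inner \<Rightarrow> ereal) \<Rightarrow> 'a \<Rightarrow> 'a set" where
  "subdiff \<Phi> x = {g. \<Phi> x \<noteq> \<infinity> \<and> \<Phi> x \<noteq> -\<infinity> \<and>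
      (\<forall>y. \<Phi> y \<ge> \<Phi> x + ereal (g \<bullet> (y - x)))}"

definition dom_subdiff :: "('a::real_inner \<Rightarrow> ereal) \<Rightarrow> 'a set" where
  "dom_subdiff \<Phi> = {x. subdiff \<Phi> x \<noteq> {}}"

definition strictly_convex_on_e :: "'a::real_vector set \<Rightarrow> ('a \<Rightarrow> ereal) \<Rightarrow> bool" where
  "strictly_convex_on_e C \<Phi> \<longleftrightarrow> (\<forall>x\<in>C. \<forall>y\<in>C. \<forall>t. x \<noteq> y \<and> 0 < t \<and> t < 1 \<longrightarrow>
     \<Phi> (t *\<^sub>R x + (1 - t) *\<^sub>R y) < ereal t * \<Phi> x + ereal (1 - t) * \<Phi> y)"

definition essentially_smooth :: "('a::euclidean_space \<Rightarrow> ereal) \<Rightarrow> bool" where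
  "essentially_smooth \<Phi> \<longleftrightarrow> interior (edom \<Phi>) \<noteq> {} \<and>
     (\<forall>z\<in>interior (edom \<Phi>). ediff_at \<Phi> z) \<and>
     (\<forall>zs z. (\<forall>n. zs n \<in> interior (edom \<Phi>)) \<longrightarrow> zs \<longlonglongrightarrow> z \<longrightarrow> z \<in> frontier (edom \<Phi>) \<longrightarrow>
        filterlim (\<lambda>n. norm (egrad \<Phi> (zs n))) at_top sequentially)"

definition essentially_strictly_convex :: "('a::euclidean_space \<Rightarrow> ereal) \<Rightarrow> bool" where
  "essentially_strictly_convex \<Phi> \<longleftrightarrow>
     (\<forall>C. convex C \<and> C \<subseteq> dom_subdiff \<Phi> \<longrightarrow> strictly_convex_on_e C \<Phi>)"

definition legendre :: "('a::euclidean_space \<Rightarrow> ereal) \<Rightarrow> bool" where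
  "legendre \<Phi> \<longleftrightarrow> Gamma0 \<Phi> \<and> essentially_smooth \<Phi> \<and> essentially_strictly_convex \<Phi>"

definition C2_int_dom :: "('a::euclidean_space \<Rightarrow> ereal) \<Rightarrow> bool" where
  "C2_int_dom \<Phi> \<longleftrightarrow>
     (\<forall>z\<in>interior (edom \<Phi>). ediff_at \<Phi> z \<and> egrad \<Phi> differentiable (at z)) \<and>
     continuous_on (interior (edom \<Phi>)) (\<lambda>z. Blinfun (frechet_derivative (egrad \<Phi>) (at z)))"

definition very_strictly_convex :: "('a::euclidean_space \<Rightarrow> ereal) \<Rightarrow> bool" where
  "very_strictly_convex \<Phi> \<longleftrightarrow>
     (\<forall>z\<in>interior (edom \<Phi>). \<forall>h. h \<noteq> 0 \<longrightarrow> h \<bullet> frechet_derivative (egrad \<Phi>) (at z) h > 0)"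

definition bregman :: "('a::euclidean_space \<Rightarrow> ereal) \<Rightarrow> 'a \<Rightarrow> 'a \<Rightarrow> ereal" where
  "bregman \<Phi> z1 z2 = (if z1 \<in> edom \<Phi> \<and> z2 \<in> interior (edom \<Phi>)
      then \<Phi> z1 - \<Phi> z2 - ereal (egrad \<Phi> z2 \<bullet> (z1 - z2)) else \<infinity>)"

definition bregman_dist :: "('a::euclidean_space \<Rightarrow> ereal) \<Rightarrow> 'a \<Rightarrow> 'a set \<Rightarrow> ereal" where
  "bregman_dist \<Phi> y Z = (INF x\<in>Z. bregman \<Phi> x y)"

definition coercive :: "('a::real_normed_vector \<Rightarrow> ereal) \<Rightarrow> bool" where
  "coercive h \<longleftrightarrow> (\<forall>M::real. \<exists>R. \<forall>z. norm z \<ge> R \<longrightarrow> h z \<ge> ereal M)"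

definition monotone_op :: "('a::real_inner \<Rightarrow> 'a set) \<Rightarrow> bool" where
  "monotone_op T \<longleftrightarrow> (\<forall>x y u v. u \<in> T x \<longrightarrow> v \<in> T y \<longrightarrow> (x - y) \<bullet> (u - v) \<ge> 0)"

definition maximal_monotone :: "('a::real_inner \<Rightarrow> 'a set) \<Rightarrow> bool" where
  "maximal_monotone T \<longleftrightarrow> monotone_op T \<and>
     (\<forall>S. monotone_op S \<and> (\<forall>x. T x \<subseteq> S x) \<longrightarrow> S = T)"

definition dom_op :: "('a \<Rightarrow> 'b set) \<Rightarrow> 'a set" where
  "dom_op T = {x. T x \<noteq> {}}"

definition zer :: "('a \<Rightarrow> 'b::zero set) \<Rightarrow> 'a set" where
  "zer T = {x. 0 \<in> T x}"

definition error_bound :: "('a::real_normed_vector \<Rightarrow> 'a set) \<Rightarrow> 'a \<Rightarrow> real \<Rightarrow> real \<Rightarrow> bool" where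
  "error_bound T zbar \<delta> \<kappa> \<longleftrightarrow> \<delta> > 0 \<and> \<kappa> > 0 \<and>
     (\<forall>z w. w \<in> T z \<longrightarrow> norm (z - zbar) \<le> \<delta> \<longrightarrow> norm w \<le> \<delta> \<longrightarrow>
        infdist z (zer T) \<le> \<kappa> * norm w)"

definition inexact_bppa ::
  "('a::euclidean_space \<Rightarrow> ereal) \<Rightarrow> ('a \<Rightarrow> 'a set) \<Rightarrow> (nat \<Rightarrow> real) \<Rightarrow> (nat \<Rightarrow> real)
   \<Rightarrow> (nat \<Rightarrow> 'a) \<Rightarrow> (nat \<Rightarrow> 'a) \<Rightarrow> (nat \<Rightarrow> 'a) \<Rightarrow> bool" where
  "inexact_bppa \<Phi> T \<sigma>s \<rho>s z p w \<longleftrightarrow>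
     z 0 \<in> interior (edom \<Phi>) \<and>
     (\<forall>k. p k \<in> edom \<Phi> \<and> w k \<in> T (p k) \<and>
          egrad \<Phi> (z k) - \<sigma>s k *\<^sub>R w k \<in> interior (edom (conj_fun \<Phi>)) \<and>
          z (Suc k) = egrad (conj_fun \<Phi>) (egrad \<Phi> (z k) - \<sigma>s k *\<^sub>R w k) \<and>
          z (Suc k) \<in> interior (edom \<Phi>) \<and>
          bregman \<Phi> (p k) (z (Suc k)) \<le> ereal (\<rho>s k) * bregman \<Phi> (p k) (z k))"

end

theory Submission
  imports Defs
begin


locale LF =
  fixes \<Phi> :: "'a::euclidean_space \<Rightarrow> ereal"
  assumes leg: "legendre \<Phi>" and C2: "C2_int_dom \<Phi>" and vsc: "very_strictly_convex \<Phi>"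
begin

abbreviation "f \<equiv> rfun \<Phi>"
abbreviation "U \<equiv> interior (edom \<Phi>)"
abbreviation "G \<equiv> egrad \<Phi>"

lemma proper: "\<And>x. \<Phi> x \<noteq> -\<infinity>" "edom \<Phi> \<noteq> {}"
  using leg unfolding legendre_def Gamma0_def proper_fun_def by auto

lemma lsc: "lsc_fun \<Phi>"
  using leg unfolding legendre_def Gamma0_def by auto

lemma cvx: "convex_efun \<Phi>"
  using leg unfolding legendre_def Gamma0_def by auto

lemma fin: "x \<in> edom \<Phi> \<Longrightarrow> \<Phi> x = ereal (f x)"
  using proper(1)[of x] unfolding edom_def rfun_def
  by (cases "\<Phi> x") auto

lemma edomI: "\<Phi> x = ereal r \<Longrightarrow> x \<in> edom \<Phi>"
  unfolding edom_def by auto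

lemma cvx_real:
  assumes "x \<in> edom \<Phi>" "y \<in> edom \<Phi>" "0 \<le> t" "t \<le> 1"
  shows "t *\<^sub>R x + (1 - t) *\<^sub>R y \<in> edom \<Phi> \<and> f (t *\<^sub>R x + (1 - t) *\<^sub>R y) \<le> t * f x + (1 - t) * f y"
proof (cases "t = 0 \<or> t = 1")
  case True then show ?thesis using assms by auto
next
  case False
  then have t: "0 < t" "t < 1" using assms by auto
  have "\<Phi> (t *\<^sub>R x + (1 - t) *\<^sub>R y) \<le> ereal t * \<Phi> x + ereal (1 - t) * \<Phi> y"
    using cvx t unfolding convex_efun_def by blast
  also have "\<dots> = ereal (t * f x + (1 - t) * f y)"
    using fin[OF assms(1)] fin[OF assms(2)] by simp
  finally have le: "\<Phi> (t *\<^sub>R x + (1 - t) *\<^sub>R y) \<le> ereal (t * f x + (1 - t) * f y)" .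
  then have m: "t *\<^sub>R x + (1 - t) *\<^sub>R y \<in> edom \<Phi>" unfolding edom_def
    using le_less_trans by fastforce
  show ?thesis using m le fin[OF m] by simp
qed

lemma convex_edom: "convex (edom \<Phi>)"
  unfolding convex_alt
proof (intro ballI allI impI)
  fix x y and u :: real assume xy: "x \<in> edom \<Phi>" "y \<in> edom \<Phi>" and u: "0 \<le> u \<and> u \<le> 1"
  have "u *\<^sub>R y + (1 - u) *\<^sub>R x \<in> edom \<Phi>" using cvx_real[OF xy(2) xy(1), of u] u by simp
  then show "(1 - u) *\<^sub>R x + u *\<^sub>R y \<in> edom \<Phi>" by (simp add: add.commute)
qed

lemma convex_U: "convex U" by (rule convex_interior[OF convex_edom])
lemma open_U: "open U" by simp
lemma U_sub: "U \<subseteq> edom \<Phi>" by (rule interior_subset)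

lemma smooth: "essentially_smooth \<Phi>"
  using leg unfolding legendre_def by auto

lemma U_ne: "U \<noteq> {}" using smooth unfolding essentially_smooth_def by auto

lemma f_deriv:
  assumes "z \<in> U"
  shows "(f has_derivative (\<lambda>h. G z \<bullet> h)) (at z)"
proof -
  have "ediff_at \<Phi> z" using smooth assms unfolding essentially_smooth_def by auto
  then have "\<exists>g. (f has_derivative (\<lambda>h. g \<bullet> h)) (at z)" unfolding ediff_at_def .
  then show ?thesis unfolding egrad_def grad_def by (rule someI_ex)
qed

lemma f_cont: "continuous_on U f"
proof (rule continuous_at_imp_continuous_on, rule ballI)
  fix z assume "z \<in> U"
  from has_derivative_continuous[OF f_deriv[OF this]] show "isCont f z" .
qed

lemma line_deriv:
  assumes "(g has_derivative (\<lambda>v. q \<bullet> v)) (at (a + t *\<^sub>R h))"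
  shows "((\<lambda>s. g (a + s *\<^sub>R h)) has_real_derivative (q \<bullet> h)) (at t)"
proof -
  have l: "((\<lambda>s. a + s *\<^sub>R h) has_derivative (\<lambda>s. s *\<^sub>R h)) (at t)"
    by (auto intro!: derivative_eq_intros)
  have g: "(g has_derivative (\<lambda>v. q \<bullet> v)) (at ((\<lambda>s. a + s *\<^sub>R h) t))" using assms by simp
  have "((g \<circ> (\<lambda>s. a + s *\<^sub>R h)) has_derivative ((\<lambda>v. q \<bullet> v) \<circ> (\<lambda>s. s *\<^sub>R h))) (at t)"
    by (rule diff_chain_at[OF l g])
  moreover have "((\<lambda>v. q \<bullet> v) \<circ> (\<lambda>s. s *\<^sub>R h)) = (*) (q \<bullet> h)"
    by (auto simp: fun_eq_iff)
  ultimately show ?thesis unfolding has_field_derivative_def by (simp add: o_def)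
qed

lemma grad_ineq:
  assumes z: "z \<in> U" and x: "x \<in> edom \<Phi>"
  shows "f z + G z \<bullet> (x - z) \<le> f x"
proof -
  define h where "h = x - z"
  define \<phi> where "\<phi> = (\<lambda>t. f (z + t *\<^sub>R h))"
  have fd: "(f has_derivative (\<lambda>v. G z \<bullet> v)) (at (z + 0 *\<^sub>R h))" using f_deriv[OF z] by simp
  have "(\<phi> has_real_derivative (G z \<bullet> h)) (at 0)"
    unfolding \<phi>_def by (rule line_deriv[OF fd])
  then have "((\<lambda>t. (\<phi> t - \<phi> 0) / (t - 0)) \<longlongrightarrow> G z \<bullet> h) (at 0)"
    by (simp only: has_field_derivative_iff)
  then have lim: "((\<lambda>t. (\<phi> t - \<phi> 0) / (t - 0)) \<longlongrightarrow> G z \<bullet> h) (at_right 0)"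
    by (rule tendsto_mono[OF at_le[OF subset_UNIV]])
  have zU: "z \<in> edom \<Phi>" using z U_sub by auto
  have key: "(\<phi> t - \<phi> 0) / (t - 0) \<le> f x - f z" if t: "0 < t" "t < 1" for t
  proof -
    have "z + t *\<^sub>R h = t *\<^sub>R x + (1 - t) *\<^sub>R z" by (simp add: h_def algebra_simps)
    then have "\<phi> t \<le> t * f x + (1 - t) * f z"
      using cvx_real[OF x zU, of t] t unfolding \<phi>_def by simp
    then have "\<phi> t - \<phi> 0 \<le> t * (f x - f z)" unfolding \<phi>_def by (simp add: algebra_simps)
    then show ?thesis using t by (simp add: divide_le_eq mult.commute)
  qed
  have ev: "eventually (\<lambda>t. (\<phi> t - \<phi> 0) / (t - 0) \<le> f x - f z) (at_right 0)"
    unfolding eventually_at_right_field using key by (intro exI[of _ 1]) auto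
  have "G z \<bullet> h \<le> f x - f z"
    using tendsto_upperbound[OF lim ev] by simp
  then show ?thesis unfolding h_def by simp
qed

definition "D x z = f x - f z - G z \<bullet> (x - z)"

lemma bregman_eq: "x \<in> edom \<Phi> \<Longrightarrow> z \<in> U \<Longrightarrow> bregman \<Phi> x z = ereal (D x z)"
  unfolding bregman_def D_def using fin U_sub by auto

lemma D_nonneg: "x \<in> edom \<Phi> \<Longrightarrow> z \<in> U \<Longrightarrow> 0 \<le> D x z"
  using grad_ineq unfolding D_def by fastforce

lemma D_self: "D z z = 0" unfolding D_def by simp

lemma grad_mono: assumes "a \<in> U" "b \<in> U" shows "0 \<le> (G a - G b) \<bullet> (a - b)"
proof -
  have "a \<in> edom \<Phi>" "b \<in> edom \<Phi>" using assms U_sub by auto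
  then have "f a + G a \<bullet> (b - a) \<le> f b" "f b + G b \<bullet> (a - b) \<le> f a"
    using grad_ineq assms by auto
  moreover have "(G a - G b) \<bullet> (a - b) = - (G a \<bullet> (b - a)) - G b \<bullet> (a - b)"
    by (simp add: inner_diff_left inner_diff_right)
  ultimately show ?thesis by linarith
qed

end


context LF begin

abbreviation "H z \<equiv> frechet_derivative G (at z)"

lemma G_deriv: "z \<in> U \<Longrightarrow> (G has_derivative H z) (at z)"
  using C2 unfolding C2_int_dom_def by (simp add: frechet_derivative_works)

lemma H_lin: "z \<in> U \<Longrightarrow> bounded_linear (H z)"
  using G_deriv has_derivative_bounded_linear by blast

lemma H_cont: "continuous_on U (\<lambda>z. Blinfun (H z))"
  using C2 unfolding C2_int_dom_def by simp

lemma H_pd: "z \<in> U \<Longrightarrow> h \<noteq> 0 \<Longrightarrow> 0 < h \<bullet> H z h"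
  using vsc unfolding very_strictly_convex_def by blast

lemma G_cont: "continuous_on U G"
proof (rule continuous_at_imp_continuous_on, rule ballI)
  fix z assume "z \<in> U"
  from has_derivative_continuous[OF G_deriv[OF this]] show "isCont G z" .
qed

lemma gline_deriv:
  assumes "b + t *\<^sub>R h \<in> U"
  shows "((\<lambda>s. G (b + s *\<^sub>R h) \<bullet> h) has_real_derivative (h \<bullet> H (b + t *\<^sub>R h) h)) (at t)"
proof -
  let ?p = "b + t *\<^sub>R h"
  have l: "((\<lambda>s. b + s *\<^sub>R h) has_derivative (\<lambda>s. s *\<^sub>R h)) (at t)"
    by (auto intro!: derivative_eq_intros)
  have g: "(G has_derivative H ?p) (at ((\<lambda>s. b + s *\<^sub>R h) t))" using G_deriv[OF assms] by simp
  have c: "((G \<circ> (\<lambda>s. b + s *\<^sub>R h)) has_derivative (H ?p \<circ> (\<lambda>s. s *\<^sub>R h))) (at t)"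
    by (rule diff_chain_at[OF l g])
  have "((\<lambda>s. (G \<circ> (\<lambda>s. b + s *\<^sub>R h)) s \<bullet> h) has_derivative (\<lambda>s. (H ?p \<circ> (\<lambda>s. s *\<^sub>R h)) s \<bullet> h)) (at t)"
    by (rule has_derivative_inner_left[OF c])
  moreover have "(\<lambda>s. (H ?p \<circ> (\<lambda>s. s *\<^sub>R h)) s \<bullet> h) = (*) (h \<bullet> H ?p h)"
  proof
    fix s :: real
    interpret bounded_linear "H ?p" using H_lin[OF assms] .
    show "(H ?p \<circ> (\<lambda>s. s *\<^sub>R h)) s \<bullet> h = (h \<bullet> H ?p h) * s"
      by (simp add: scaleR inner_commute)
  qed
  ultimately show ?thesis unfolding has_field_derivative_def by (simp add: o_def)
qed

lemma local_quad:
  assumes e: "0 < e" and K: "cball c e \<subseteq> U"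
  shows "\<exists>\<theta> \<Theta>. 0 < \<theta> \<and> \<theta> \<le> \<Theta> \<and> (\<forall>a\<in>cball c e. \<forall>b\<in>cball c e.
     norm (G a - G b) \<le> \<Theta> * norm (a - b) \<and> \<theta> / 2 * (norm (a - b))\<^sup>2 \<le> D a b \<and> D a b \<le> \<Theta> / 2 * (norm (a - b))\<^sup>2)"
proof -
  let ?K = "cball c e"
  have cK: "compact ?K" "convex ?K" "?K \<noteq> {}" using e by auto
  have contK: "continuous_on ?K (\<lambda>z. Blinfun (H z))" using continuous_on_subset[OF H_cont K] .
  obtain z1 where z1: "z1 \<in> ?K" "\<And>z. z \<in> ?K \<Longrightarrow> norm (Blinfun (H z)) \<le> norm (Blinfun (H z1))"
    using continuous_attains_sup[OF cK(1) cK(3) continuous_on_norm[OF contK]] by blast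
  define \<Theta>0 where "\<Theta>0 = norm (Blinfun (H z1))"
  have onorm: "onorm (H z) \<le> \<Theta>0" if "z \<in> ?K" for z
  proof -
    have "onorm (H z) = norm (Blinfun (H z))"
      using bounded_linear_Blinfun_apply[OF H_lin] that K by (auto simp: norm_blinfun.rep_eq)
    then show ?thesis using z1(2)[OF that] \<Theta>0_def by simp
  qed
  have lip: "norm (G a - G b) \<le> \<Theta>0 * norm (a - b)" if "a \<in> ?K" "b \<in> ?K" for a b
  proof (rule differentiable_bound[OF cK(2) _ onorm that])
    fix x assume "x \<in> ?K"
    then show "(G has_derivative H x) (at x within ?K)"
      using G_deriv K has_derivative_at_withinI by blast
  qed
  let ?S = "?K \<times> sphere (0::'a) 1"
  have cS: "compact ?S" "?S \<noteq> {}" using cK by (auto intro!: compact_Times)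
  have contS: "continuous_on ?S (\<lambda>p. snd p \<bullet> blinfun_apply (Blinfun (H (fst p))) (snd p))"
    by (intro continuous_intros continuous_on_compose2[OF contK]) auto
  obtain p0 where p0: "p0 \<in> ?S" "\<And>p. p \<in> ?S \<Longrightarrow>
      snd p0 \<bullet> blinfun_apply (Blinfun (H (fst p0))) (snd p0) \<le> snd p \<bullet> blinfun_apply (Blinfun (H (fst p))) (snd p)"
    using continuous_attains_inf[OF cS contS] by blast
  define \<theta> where "\<theta> = snd p0 \<bullet> blinfun_apply (Blinfun (H (fst p0))) (snd p0)"
  have Happ: "blinfun_apply (Blinfun (H z)) = H z" if "z \<in> ?K" for z
    using bounded_linear_Blinfun_apply[OF H_lin] that K by auto
  have th_pos: "0 < \<theta>"
  proof -
    have "fst p0 \<in> ?K" "snd p0 \<noteq> 0" using p0(1) by auto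
    then show ?thesis unfolding \<theta>_def using Happ H_pd K by auto
  qed
  have th_bound: "\<theta> * (norm h)\<^sup>2 \<le> h \<bullet> H z h" if z: "z \<in> ?K" for z h
  proof (cases "h = 0")
    case True
    have "H z 0 = 0" using H_lin[of z] z K linear_0 bounded_linear.linear by blast
    then show ?thesis using True by simp
  next
    case False
    interpret bounded_linear "H z" using H_lin z K by auto
    define u where "u = h /\<^sub>R norm h"
    have u: "(z, u) \<in> ?S" using z False by (simp add: u_def)
    have "\<theta> \<le> u \<bullet> H z u" using p0(2)[OF u] Happ z unfolding \<theta>_def by simp
    moreover have "h = norm h *\<^sub>R u" using False by (simp add: u_def)
    ultimately have "h \<bullet> H z h = (norm h)\<^sup>2 * (u \<bullet> H z u)"
      by (metis (no_types, lifting) inner_scaleR_left inner_scaleR_right mult.assoc power2_eq_square scaleR)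
    then show ?thesis using mult_left_mono[OF \<open>\<theta> \<le> u \<bullet> H z u\<close>, of "(norm h)\<^sup>2"]
      by (simp add: mult.commute)
  qed
  define \<Theta> where "\<Theta> = max \<Theta>0 \<theta>"
  have lip2: "norm (G a - G b) \<le> \<Theta> * norm (a - b)" if "a \<in> ?K" "b \<in> ?K" for a b
    using lip[OF that] unfolding \<Theta>_def by (meson max.cobounded1 mult_right_mono norm_ge_zero order_trans)
  have quad: "\<theta> / 2 * (norm (a - b))\<^sup>2 \<le> D a b \<and> D a b \<le> \<Theta> / 2 * (norm (a - b))\<^sup>2"
    if a: "a \<in> ?K" and b: "b \<in> ?K" for a b
  proof -
    define h where "h = a - b"
    have inK: "b + t *\<^sub>R h \<in> ?K" if "0 \<le> t" "t \<le> 1" for t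
    proof -
      have "b + t *\<^sub>R h = t *\<^sub>R a + (1 - t) *\<^sub>R b" by (simp add: h_def algebra_simps)
      then show ?thesis using cK(2) a b that unfolding convex_alt
        by (metis add.commute)
    qed
    define g where "g = (\<lambda>s. G (b + s *\<^sub>R h) \<bullet> h)"
    define \<phi> where "\<phi> = (\<lambda>s. f (b + s *\<^sub>R h))"
    have dphi: "(\<phi> has_real_derivative g t) (at t)" if "0 \<le> t" "t \<le> 1" for t
      unfolding \<phi>_def g_def by (rule line_deriv) (use f_deriv inK[OF that] K in blast)
    have dg: "(g has_real_derivative (h \<bullet> H (b + t *\<^sub>R h) h)) (at t)" if "0 \<le> t" "t \<le> 1" for t
      unfolding g_def by (rule gline_deriv) (use inK[OF that] K in blast)
    have g_low: "g 0 + \<theta> * (norm h)\<^sup>2 * t \<le> g t" if "0 \<le> t" "t \<le> 1" for t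
    proof -
      have "(\<lambda>s. g s - \<theta> * (norm h)\<^sup>2 * s) 0 \<le> (\<lambda>s. g s - \<theta> * (norm h)\<^sup>2 * s) t"
      proof (rule deriv_nonneg_imp_mono[OF _ _ that(1)])
        fix s assume s: "s \<in> {0..t}"
        show "((\<lambda>s. g s - \<theta> * (norm h)\<^sup>2 * s) has_real_derivative (h \<bullet> H (b + s *\<^sub>R h) h - \<theta> * (norm h)\<^sup>2)) (at s)"
          using s that by (auto intro!: derivative_eq_intros dg)
        show "0 \<le> h \<bullet> H (b + s *\<^sub>R h) h - \<theta> * (norm h)\<^sup>2"
          using th_bound[OF inK] s that by auto
      qed
      then show ?thesis by simp
    qed
    have g_up: "g t \<le> g 0 + \<Theta> * (norm h)\<^sup>2 * t" if "0 \<le> t" "t \<le> 1" for t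
    proof -
      have "g t - g 0 = (G (b + t *\<^sub>R h) - G b) \<bullet> h" unfolding g_def by (simp add: inner_diff_left)
      also have "\<dots> \<le> norm (G (b + t *\<^sub>R h) - G b) * norm h" by (rule norm_cauchy_schwarz)
      also have "\<dots> \<le> \<Theta> * norm (t *\<^sub>R h) * norm h"
        using lip2[OF inK[OF that] b] by (simp add: mult_right_mono)
      also have "\<dots> = \<Theta> * (norm h)\<^sup>2 * t" using that by (simp add: power2_eq_square)
      finally show ?thesis by simp
    qed
    have lowD: "\<phi> 0 + g 0 + \<theta> / 2 * (norm h)\<^sup>2 \<le> \<phi> 1"
    proof -
      have "(\<lambda>s. \<phi> s - g 0 * s - \<theta> / 2 * (norm h)\<^sup>2 * s\<^sup>2) 0 \<le> (\<lambda>s. \<phi> s - g 0 * s - \<theta> / 2 * (norm h)\<^sup>2 * s\<^sup>2) 1"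
      proof (rule deriv_nonneg_imp_mono[of 0 1])
        fix s :: real assume s: "s \<in> {0..1}"
        show "((\<lambda>s. \<phi> s - g 0 * s - \<theta> / 2 * (norm h)\<^sup>2 * s\<^sup>2) has_real_derivative (g s - g 0 - \<theta> * (norm h)\<^sup>2 * s)) (at s)"
          using s by (auto intro!: derivative_eq_intros dphi simp: power2_eq_square algebra_simps)
        show "0 \<le> g s - g 0 - \<theta> * (norm h)\<^sup>2 * s" using g_low[of s] s by auto
      qed simp
      then show ?thesis by simp
    qed
    have upD: "\<phi> 1 \<le> \<phi> 0 + g 0 + \<Theta> / 2 * (norm h)\<^sup>2"
    proof -
      have "(\<lambda>s. - (\<phi> s - g 0 * s - \<Theta> / 2 * (norm h)\<^sup>2 * s\<^sup>2)) 0 \<le> (\<lambda>s. - (\<phi> s - g 0 * s - \<Theta> / 2 * (norm h)\<^sup>2 * s\<^sup>2)) 1"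
      proof (rule deriv_nonneg_imp_mono[of 0 1])
        fix s :: real assume s: "s \<in> {0..1}"
        show "((\<lambda>s. - (\<phi> s - g 0 * s - \<Theta> / 2 * (norm h)\<^sup>2 * s\<^sup>2)) has_real_derivative (- (g s - g 0 - \<Theta> * (norm h)\<^sup>2 * s))) (at s)"
          using s by (auto intro!: derivative_eq_intros dphi simp: power2_eq_square algebra_simps)
        show "0 \<le> - (g s - g 0 - \<Theta> * (norm h)\<^sup>2 * s)" using g_up[of s] s by auto
      qed simp
      then show ?thesis by simp
    qed
    have "D a b = \<phi> 1 - \<phi> 0 - g 0" unfolding D_def \<phi>_def g_def h_def by simp
    then show ?thesis using lowD upD unfolding h_def by simp
  qed
  show ?thesis
    by (rule exI[of _ \<theta>], rule exI[of _ \<Theta>]) (use th_pos lip2 quad in \<open>auto simp: \<Theta>_def\<close>)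
qed

end


lemma bounded_subseq:
  fixes x :: "nat \<Rightarrow> 'a::euclidean_space"
  assumes "\<And>n. norm (x n) \<le> R"
  obtains l r where "strict_mono r" "(x \<circ> r) \<longlonglongrightarrow> l"
proof -
  have "seq_compact (cball (0::'a) R)" by (rule compact_imp_seq_compact) simp
  moreover have "\<forall>n. x n \<in> cball 0 R" using assms by simp
  ultimately obtain l r where "l \<in> cball 0 R" "strict_mono r" "(x \<circ> r) \<longlonglongrightarrow> l" by (rule seq_compactE)
  then show ?thesis using that by blast
qed

lemma convex_line:
  assumes "convex S" "a \<in> S" "b \<in> S" "0 \<le> t" "t \<le> 1"
  shows "b + t *\<^sub>R (a - b) \<in> S"
proof -
  have "(1 - t) *\<^sub>R b + t *\<^sub>R a \<in> S" using assms unfolding convex_alt by blast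
  moreover have "(1 - t) *\<^sub>R b + t *\<^sub>R a = b + t *\<^sub>R (a - b)" by (simp add: algebra_simps)
  ultimately show ?thesis by simp
qed

lemma cball_tri:
  assumes "z \<in> cball c r" "norm (p - z) \<le> s"
  shows "p \<in> cball c (r + s)"
proof -
  have "dist c p \<le> dist c z + dist z p" by (rule dist_triangle)
  then show ?thesis using assms by (simp add: dist_norm norm_minus_commute)
qed

context LF begin

lemma lsc_seq:
  assumes xs: "xs \<longlonglongrightarrow> x" and le: "\<And>n. \<Phi> (xs n) \<le> ereal (g n)" and g: "g \<longlonglongrightarrow> L"
  shows "\<Phi> x \<le> ereal L"
proof (rule ccontr)
  assume "\<not> \<Phi> x \<le> ereal L"
  then have "ereal L < \<Phi> x" by simp
  then obtain a where a: "ereal L < ereal a" "ereal a < \<Phi> x" using ereal_dense2 by blast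
  have "ereal a < Liminf (at x) \<Phi>" using a(2) lsc unfolding lsc_fun_def by (meson order_less_le_trans)
  then have "eventually (\<lambda>u. \<Phi> u > ereal a) (at x)" by (rule less_LiminfD)
  then obtain d where d: "d > 0" "\<And>u. u \<noteq> x \<Longrightarrow> dist u x < d \<Longrightarrow> \<Phi> u > ereal a"
    unfolding eventually_at by auto
  have d2: "\<Phi> u > ereal a" if "dist u x < d" for u
    using d that a(2) by (cases "u = x") auto
  have "eventually (\<lambda>n. dist (xs n) x < d) sequentially" using xs d(1) by (rule tendstoD)
  moreover have "eventually (\<lambda>n. g n < a) sequentially" using g a(1) by (simp add: order_tendstoD(2))
  ultimately have "eventually (\<lambda>n. dist (xs n) x < d \<and> g n < a) sequentially" by (rule eventually_conj)
  then obtain N where N: "\<And>n. n \<ge> N \<Longrightarrow> dist (xs n) x < d \<and> g n < a" unfolding eventually_sequentially by blast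
  have "ereal (g N) < ereal a" using N[of N] by simp
  then have "\<Phi> (xs N) < ereal a" using le[of N] by (rule order.strict_trans1[rotated])
  moreover have "ereal a < \<Phi> (xs N)" using d2 N[of N] by simp
  ultimately show False by simp
qed

lemma blowup_bound:
  assumes x: "x \<in> U"
  obtains r M where "r > 0" "\<And>z. z \<in> U \<Longrightarrow> f x - M + r * norm (G z) \<le> D x z"
proof -
  obtain r where r: "r > 0" "cball x r \<subseteq> U" using open_U x open_contains_cball by blast
  have "compact (cball x r)" "cball x r \<noteq> {}" using r by auto
  then obtain m where m: "m \<in> cball x r" "\<And>u. u \<in> cball x r \<Longrightarrow> f u \<le> f m"
    using continuous_attains_sup[OF _ _ continuous_on_subset[OF f_cont r(2)]] by blast
  show ?thesis
  proof (rule that[OF r(1)])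
    fix z assume z: "z \<in> U"
    show "f x - f m + r * norm (G z) \<le> D x z"
    proof (cases "G z = 0")
      case True
      have "f z \<le> f x" using grad_ineq[OF z, of x] x U_sub True by auto
      moreover have "f x \<le> f m" using m(2)[of x] r by simp
      ultimately show ?thesis using True unfolding D_def by simp
    next
      case False
      define u where "u = x + (r / norm (G z)) *\<^sub>R G z"
      have uK: "u \<in> cball x r" using r(1) False by (simp add: u_def dist_norm)
      then have "f z + G z \<bullet> (u - z) \<le> f u" using grad_ineq[OF z] r(2) U_sub by blast
      moreover have "G z \<bullet> (u - z) = G z \<bullet> (x - z) + r * norm (G z)"
        using False by (simp add: u_def inner_diff_right inner_add_right power2_norm_eq_inner[symmetric] power2_eq_square)
      moreover have "f u \<le> f m" using m(2)[OF uK] .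
      ultimately show ?thesis unfolding D_def by linarith
    qed
  qed
qed

lemma limit_in_U:
  assumes zs: "\<And>n. zs n \<in> U" and lim: "zs \<longlonglongrightarrow> z" and B: "\<And>n. norm (G (zs n)) \<le> B"
  shows "z \<in> U"
proof (rule ccontr)
  assume "z \<notin> U"
  moreover have "z \<in> closure (edom \<Phi>)"
    unfolding closure_sequential using zs lim U_sub by blast
  ultimately have "z \<in> frontier (edom \<Phi>)" unfolding frontier_def by simp
  then have "filterlim (\<lambda>n. norm (G (zs n))) at_top sequentially"
    using smooth zs lim unfolding essentially_smooth_def by blast
  then have "eventually (\<lambda>n. B + 1 \<le> norm (G (zs n))) sequentially" unfolding filterlim_at_top by blast
  then obtain n where "B + 1 \<le> norm (G (zs n))" by (meson eventually_sequentially order_refl)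
  then show False using B[of n] by simp
qed

lemma ray_mono:
  assumes p: "p \<in> U" and z: "z \<in> U" and t: "0 \<le> t" "t \<le> 1"
  shows "D p (p + t *\<^sub>R (z - p)) \<le> D p z"
proof -
  define zt where "zt = p + t *\<^sub>R (z - p)"
  have ztU: "zt \<in> U" unfolding zt_def by (rule convex_line[OF convex_U z p t])
  have id: "D p z - D p zt - D zt z = (G zt - G z) \<bullet> (p - zt)"
    unfolding D_def by (simp add: inner_diff_left inner_diff_right)
  have "0 \<le> (G z - G zt) \<bullet> (z - zt)" using grad_mono[OF z ztU] .
  moreover have "z - zt = (1 - t) *\<^sub>R (z - p)" by (simp add: zt_def algebra_simps)
  ultimately have m: "0 \<le> (1 - t) * ((G z - G zt) \<bullet> (z - p))" by simp
  have "0 \<le> (G zt - G z) \<bullet> (p - zt)"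
  proof (cases "t = 1")
    case True then show ?thesis by (simp add: zt_def)
  next
    case False
    then have "0 \<le> (G z - G zt) \<bullet> (z - p)" using m t by (simp add: zero_le_mult_iff)
    moreover have "(G zt - G z) \<bullet> (p - zt) = t * ((G z - G zt) \<bullet> (z - p))"
      by (simp add: zt_def inner_diff_left inner_diff_right algebra_simps)
    ultimately show ?thesis using t by simp
  qed
  moreover have "0 \<le> D zt z" using D_nonneg ztU z U_sub by auto
  ultimately have "D p zt \<le> D p z" using id by linarith
  then show ?thesis by (simp add: zt_def)
qed

lemma far_first:
  assumes e: "0 < e" and K: "cball c e \<subseteq> U"
    and quad: "\<And>a b. a \<in> cball c e \<Longrightarrow> b \<in> cball c e \<Longrightarrow> \<theta> / 2 * (norm (a - b))\<^sup>2 \<le> D a b"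
    and th: "0 < \<theta>"
    and z: "z \<in> cball c (e/2)" and p: "p \<in> edom \<Phi>"
  shows "\<theta> / 2 * (min (norm (p - z)) (e/2))\<^sup>2 \<le> D p z"
proof (cases "norm (p - z) \<le> e/2")
  case True
  have "p \<in> cball c (e/2 + e/2)" using z True by (rule cball_tri)
  then have pK: "p \<in> cball c e" by simp
  have "z \<in> cball c e" using z e by auto
  from quad[OF pK this] show ?thesis using True by (simp add: min_def)
next
  case False
  define s where "s = (e/2) / norm (p - z)"
  have np: "e/2 < norm (p - z)" "0 < norm (p - z)" using False e by auto
  have s: "0 < s" "s \<le> 1" using np e by (auto simp: s_def field_simps)
  define q where "q = s *\<^sub>R p + (1 - s) *\<^sub>R z"
  have zU: "z \<in> U" using z K e by auto
  have zE: "z \<in> edom \<Phi>" using zU U_sub by auto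
  have qz: "q - z = s *\<^sub>R (p - z)" by (simp add: q_def algebra_simps)
  have nq: "norm (q - z) = e/2" using np e by (simp add: qz s_def)
  have qK: "q \<in> cball c e"
  proof -
    have "dist c q \<le> dist c z + dist z q" by (rule dist_triangle)
    also have "dist z q = e/2" using nq by (simp add: dist_norm norm_minus_commute)
    finally show ?thesis using z by simp
  qed
  have fq: "f q \<le> s * f p + (1 - s) * f z" using cvx_real[OF p zE, of s] s unfolding q_def by simp
  have gq: "G z \<bullet> (q - z) = s * (G z \<bullet> (p - z))" using qz by simp
  have sD: "s * D p z = s * f p - s * f z - s * (G z \<bullet> (p - z))" unfolding D_def by (simp add: algebra_simps)
  have "D q z \<le> s * D p z" using fq gq sD unfolding D_def by (simp add: algebra_simps)
  also have "\<dots> \<le> D p z" by (rule mult_left_le_one_le) (use s D_nonneg[OF p zU] in auto)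
  finally have "D q z \<le> D p z" .
  moreover have "\<theta> / 2 * (e/2)\<^sup>2 \<le> D q z"
  proof -
    have "z \<in> cball c e" using z e by auto
    from quad[OF qK this] show ?thesis using nq by simp
  qed
  ultimately show ?thesis using False by (simp add: min_def)
qed

lemma far_second:
  assumes e: "0 < e" and K: "cball c e \<subseteq> U"
    and quad: "\<And>a b. a \<in> cball c e \<Longrightarrow> b \<in> cball c e \<Longrightarrow> \<theta> / 2 * (norm (a - b))\<^sup>2 \<le> D a b"
    and th: "0 < \<theta>"
    and p: "p \<in> cball c (e/2)" and z: "z \<in> U"
  shows "\<theta> / 2 * (min (norm (p - z)) (e/2))\<^sup>2 \<le> D p z"
proof (cases "norm (p - z) \<le> e/2")
  case True
  have "z \<in> cball c (e/2 + e/2)" using p True by (intro cball_tri[of p]) (auto simp: norm_minus_commute)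
  then have zK: "z \<in> cball c e" by simp
  have "p \<in> cball c e" using p e by auto
  from quad[OF this zK] show ?thesis using True by (simp add: min_def)
next
  case False
  define t where "t = (e/2) / norm (z - p)"
  have np: "e/2 < norm (z - p)" "0 < norm (z - p)" using False e by (auto simp: norm_minus_commute)
  have t: "0 < t" "t \<le> 1" using np e by (auto simp: t_def field_simps)
  define q where "q = p + t *\<^sub>R (z - p)"
  have pU: "p \<in> U" using p K e by auto
  have nq: "norm (q - p) = e/2" using np e by (simp add: q_def t_def)
  have qK: "q \<in> cball c e"
  proof -
    have "dist c q \<le> dist c p + dist p q" by (rule dist_triangle)
    also have "dist p q = e/2" using nq by (simp add: dist_norm norm_minus_commute)
    finally show ?thesis using p by simp
  qed
  have "D p q \<le> D p z" unfolding q_def by (rule ray_mono[OF pU z]) (use t in auto)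
  moreover have "\<theta> / 2 * (e/2)\<^sup>2 \<le> D p q" using quad[of p q] qK p K e nq by (auto simp: norm_minus_commute)
  ultimately show ?thesis using False by (simp add: min_def)
qed

lemma D_zero:
  assumes x: "x \<in> U" and x': "x' \<in> edom \<Phi>" and D0: "D x' x \<le> 0"
  shows "x' = x"
proof -
  obtain e where e: "e > 0" "cball x e \<subseteq> U" using open_U x open_contains_cball by blast
  obtain \<theta> \<Theta> where th: "0 < \<theta>" and q: "\<And>a b. a \<in> cball x e \<Longrightarrow> b \<in> cball x e \<Longrightarrow> \<theta> / 2 * (norm (a - b))\<^sup>2 \<le> D a b"
    using local_quad[OF e] by blast
  have "\<theta> / 2 * (min (norm (x' - x)) (e/2))\<^sup>2 \<le> D x' x"
    by (rule far_first[OF e(1) e(2) q th _ x']) (use e in auto)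
  then have "\<theta> / 2 * (min (norm (x' - x)) (e/2))\<^sup>2 \<le> \<theta> / 2 * 0" using D0 by simp
  then have "(min (norm (x' - x)) (e/2))\<^sup>2 \<le> 0" using th by (simp only: mult_le_cancel_left_pos)
  then have "(min (norm (x' - x)) (e/2))\<^sup>2 = 0" using zero_le_power2 by (rule antisym)
  then have "min (norm (x' - x)) (e/2) = 0" by simp
  then show ?thesis using e by (simp add: min_def split: if_splits)
qed

lemma subgrad_in_U:
  assumes x: "x \<in> edom \<Phi>" and sg: "\<And>u. u \<in> edom \<Phi> \<Longrightarrow> f x + y \<bullet> (u - x) \<le> f u"
  shows "x \<in> U"
proof (rule ccontr)
  assume xU: "x \<notin> U"
  obtain x1 where x1: "x1 \<in> U" using U_ne by blast
  obtain r where r: "r > 0" "cball x1 r \<subseteq> U" using open_U x1 open_contains_cball by blast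
  have "compact (cball x1 r)" "cball x1 r \<noteq> {}" using r by auto
  then obtain m where m: "m \<in> cball x1 r" "\<And>u. u \<in> cball x1 r \<Longrightarrow> f u \<le> f m"
    using continuous_attains_sup[OF _ _ continuous_on_subset[OF f_cont r(2)]] by blast
  define v where "v = x1 - x"
  define t where "t = (\<lambda>n::nat. inverse (real (Suc n)))"
  define xs where "xs = (\<lambda>n. x + t n *\<^sub>R v)"
  have t: "0 < t n" "t n \<le> 1" for n by (auto simp: t_def field_simps)
  have xcl: "x \<in> closure (edom \<Phi>)" using x closure_subset by blast
  have xsU: "xs n \<in> U" for n
  proof -
    have "x - t n *\<^sub>R (x - x1) \<in> interior (edom \<Phi>)"
      by (rule mem_interior_closure_convex_shrink[OF convex_edom x1 xcl t])
    then show ?thesis by (simp add: xs_def v_def algebra_simps)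
  qed
  have "t \<longlonglongrightarrow> 0" unfolding t_def unfolding t_def by (rule LIMSEQ_inverse_real_of_nat)
  then have "xs \<longlonglongrightarrow> x + 0 *\<^sub>R v" unfolding xs_def by (intro tendsto_intros)
  then have lim: "xs \<longlonglongrightarrow> x" by simp
  define B where "B = f m - f x + 2 * \<bar>y \<bullet> v\<bar>"
  have bound: "norm (G (xs n)) \<le> B / r" for n
  proof -
    let ?g = "G (xs n)"
    have a: "f (xs n) + ?g \<bullet> (x - xs n) \<le> f x" using grad_ineq[OF xsU x] .
    have b: "f x + y \<bullet> (xs n - x) \<le> f (xs n)" using sg xsU U_sub by blast
    have xsx: "xs n - x = t n *\<^sub>R v" by (simp add: xs_def)
    have e1: "?g \<bullet> (x - xs n) = - (t n * (?g \<bullet> v))" by (simp add: xs_def)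
    have e2: "y \<bullet> (xs n - x) = t n * (y \<bullet> v)" by (simp add: xs_def)
    have "t n * (y \<bullet> v) \<le> t n * (?g \<bullet> v)" using a b e1 e2 by linarith
    then have yg: "y \<bullet> v \<le> ?g \<bullet> v" using t[of n] by simp
    have fb: "f x - \<bar>y \<bullet> v\<bar> \<le> f (xs n)"
    proof -
      have "\<bar>t n * (y \<bullet> v)\<bar> \<le> \<bar>y \<bullet> v\<bar>" using t[of n] by (simp add: abs_mult mult_left_le_one_le)
      then show ?thesis using b xsx by simp
    qed
    show ?thesis
    proof (cases "?g = 0")
      case True
      have "f x1 \<le> f m" using m(2)[of x1] r by simp
      moreover have "f x + y \<bullet> v \<le> f x1" using sg[of x1] x1 U_sub unfolding v_def by blast
      ultimately have "0 \<le> B" unfolding B_def by linarith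
      then show ?thesis using True r by simp
    next
      case False
      define u where "u = x1 + (r / norm ?g) *\<^sub>R ?g"
      have uK: "u \<in> cball x1 r" using r(1) False by (simp add: u_def dist_norm)
      then have c: "f (xs n) + ?g \<bullet> (u - xs n) \<le> f u" using grad_ineq[OF xsU] r(2) U_sub by blast
      have "u - xs n = (1 - t n) *\<^sub>R v + (r / norm ?g) *\<^sub>R ?g" by (simp add: u_def xs_def v_def algebra_simps)
      then have "?g \<bullet> (u - xs n) = (1 - t n) * (?g \<bullet> v) + r * norm ?g"
        using False by (simp add: inner_add_right power2_norm_eq_inner[symmetric] power2_eq_square inner_commute)
      moreover have "(1 - t n) * (y \<bullet> v) \<le> (1 - t n) * (?g \<bullet> v)" using yg t[of n] by (simp add: mult_left_mono)
      moreover have "\<bar>(1 - t n) * (y \<bullet> v)\<bar> \<le> \<bar>y \<bullet> v\<bar>" using t[of n] by (simp add: abs_mult mult_left_le_one_le)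
      moreover have "f u \<le> f m" using m(2)[OF uK] .
      ultimately have "r * norm ?g \<le> B" unfolding B_def using c fb by linarith
      then show ?thesis using r(1) by (simp add: field_simps)
    qed
  qed
  have "x \<in> U" by (rule limit_in_U[OF xsU lim bound])
  then show False using xU by simp
qed

lemma subgrad_eq_grad:
  assumes x: "x \<in> U" and sg: "\<And>u. u \<in> edom \<Phi> \<Longrightarrow> f x + y \<bullet> (u - x) \<le> f u"
  shows "G x = y"
proof -
  have d: "((\<lambda>u. f u - y \<bullet> u) has_derivative (\<lambda>h. G x \<bullet> h - y \<bullet> h)) (at x)"
    using f_deriv[OF x] by (auto intro!: derivative_eq_intros)
  have "eventually (\<lambda>u. u \<in> U) (at x)" using open_U x eventually_at_topological by blast
  then have "eventually (\<lambda>u. f x - y \<bullet> x \<le> f u - y \<bullet> u) (at x)"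
  proof (rule eventually_mono)
    fix u assume "u \<in> U"
    then have "f x + y \<bullet> (u - x) \<le> f u" using sg U_sub by blast
    then show "f x - y \<bullet> x \<le> f u - y \<bullet> u" by (simp add: inner_diff_right)
  qed
  from has_derivative_local_min[OF d this]
  have "(\<lambda>h. G x \<bullet> h - y \<bullet> h) = (\<lambda>h. 0)" .
  from fun_cong[OF this, of "G x - y"]
  have "G x \<bullet> (G x - y) - y \<bullet> (G x - y) = 0" by simp
  then have "(G x - y) \<bullet> (G x - y) = 0" by (simp add: inner_diff_left)
  then show ?thesis by simp
qed

end


context LF begin

abbreviation "\<Psi> \<equiv> conj_fun \<Phi>"
abbreviation "cf \<equiv> rfun \<Psi>"
abbreviation "V \<equiv> interior (edom \<Psi>)"

lemma conj_upper: "ereal (x \<bullet> y) - \<Phi> x \<le> \<Psi> y"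
  unfolding conj_fun_def by (rule SUP_upper) simp

lemma conj_least: "(\<And>x. ereal (x \<bullet> y) - \<Phi> x \<le> B) \<Longrightarrow> \<Psi> y \<le> B"
  unfolding conj_fun_def by (rule SUP_least)

lemma conj_less: "a < \<Psi> y \<Longrightarrow> \<exists>x. a < ereal (x \<bullet> y) - \<Phi> x"
  unfolding conj_fun_def less_SUP_iff by blast

lemma conj_fin: assumes "y \<in> edom \<Psi>" shows "\<Psi> y = ereal (cf y)"
proof -
  obtain x0 where x0: "x0 \<in> edom \<Phi>" using proper(2) by blast
  have "ereal (x0 \<bullet> y - f x0) \<le> \<Psi> y" using conj_upper[of x0 y] fin[OF x0] by simp
  then have "\<Psi> y \<noteq> -\<infinity>" by auto
  moreover have "\<Psi> y \<noteq> \<infinity>" using assms unfolding edom_def by auto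
  ultimately show ?thesis unfolding rfun_def by (cases "\<Psi> y") auto
qed

lemma conj_ge: assumes "x \<in> edom \<Phi>" "y \<in> edom \<Psi>" shows "x \<bullet> y - f x \<le> cf y"
  using conj_upper[of x y] fin[OF assms(1)] conj_fin[OF assms(2)] by simp

lemma conj_cvx:
  assumes y1: "y1 \<in> edom \<Psi>" and y2: "y2 \<in> edom \<Psi>" and t: "0 \<le> t" "t \<le> 1"
  shows "t *\<^sub>R y1 + (1 - t) *\<^sub>R y2 \<in> edom \<Psi> \<and> cf (t *\<^sub>R y1 + (1 - t) *\<^sub>R y2) \<le> t * cf y1 + (1 - t) * cf y2"
proof -
  let ?y = "t *\<^sub>R y1 + (1 - t) *\<^sub>R y2"
  have key: "ereal (x \<bullet> ?y) - \<Phi> x \<le> ereal (t * cf y1 + (1 - t) * cf y2)" for x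
  proof (cases "x \<in> edom \<Phi>")
    case True
    have "x \<bullet> ?y - f x = t * (x \<bullet> y1 - f x) + (1 - t) * (x \<bullet> y2 - f x)"
      by (simp add: inner_add_right algebra_simps)
    also have "\<dots> \<le> t * cf y1 + (1 - t) * cf y2"
      using conj_ge[OF True y1] conj_ge[OF True y2] t
      by (intro add_mono mult_left_mono) auto
    finally show ?thesis using fin[OF True] by simp
  next
    case False
    then have "\<Phi> x = \<infinity>" unfolding edom_def by simp
    then show ?thesis by simp
  qed
  have "\<Psi> ?y \<le> ereal (t * cf y1 + (1 - t) * cf y2)"
    by (rule conj_least) (rule key)
  moreover then have m: "?y \<in> edom \<Psi>" unfolding edom_def using le_less_trans by fastforce
  ultimately show ?thesis using conj_fin[OF m] by simp
qed

lemma convex_edom_conj: "convex (edom \<Psi>)"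
  unfolding convex_alt
proof (intro ballI allI impI)
  fix x y and u :: real assume xy: "x \<in> edom \<Psi>" "y \<in> edom \<Psi>" and u: "0 \<le> u \<and> u \<le> 1"
  have "u *\<^sub>R y + (1 - u) *\<^sub>R x \<in> edom \<Psi>" using conj_cvx[OF xy(2) xy(1), of u] u by simp
  then show "(1 - u) *\<^sub>R x + u *\<^sub>R y \<in> edom \<Psi>" by (simp add: add.commute)
qed

lemma convex_on_conj: "convex_on (edom \<Psi>) cf"
proof (rule convex_onI[OF _ convex_edom_conj])
  fix t :: real and x y assume t: "0 < t" "t < 1" and xy: "x \<in> edom \<Psi>" "y \<in> edom \<Psi>"
  have "cf (t *\<^sub>R y + (1 - t) *\<^sub>R x) \<le> t * cf y + (1 - t) * cf x"
    using conj_cvx[OF xy(2) xy(1), of t] t by simp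
  then show "cf ((1 - t) *\<^sub>R x + t *\<^sub>R y) \<le> (1 - t) * cf x + t * cf y" by (simp add: add.commute)
qed

lemma conj_cont: "continuous_on V cf"
  by (rule convex_on_continuous[OF open_interior convex_on_subset[OF convex_on_conj interior_subset]])
    (rule convex_interior[OF convex_edom_conj])

lemma max_props:
  assumes y: "y \<in> edom \<Psi>" and x: "x \<in> edom \<Phi>" and eq: "cf y = x \<bullet> y - f x"
  shows "x \<in> U \<and> G x = y"
proof -
  have sg: "f x + y \<bullet> (u - x) \<le> f u" if "u \<in> edom \<Phi>" for u
    using conj_ge[OF that y] eq by (simp add: inner_diff_right inner_commute)
  have "x \<in> U" by (rule subgrad_in_U[OF x sg])
  moreover have "G x = y" using subgrad_eq_grad[OF \<open>x \<in> U\<close> sg] .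
  ultimately show ?thesis by simp
qed

lemma max_unique:
  assumes y: "y \<in> edom \<Psi>" and x: "x \<in> edom \<Phi>" and eq: "cf y = x \<bullet> y - f x"
    and x': "x' \<in> edom \<Phi>" and eq': "cf y = x' \<bullet> y - f x'"
  shows "x' = x"
proof -
  have xp: "x \<in> U" "G x = y" using max_props[OF y x eq] by auto
  have "D x' x = 0" unfolding D_def using xp eq eq' by (simp add: inner_diff_right inner_commute)
  then show ?thesis using D_zero[OF xp(1) x'] by simp
qed

lemma conj_grad:
  assumes y0: "y0 \<in> V"
  shows "\<exists>x. x \<in> U \<and> G x = y0 \<and> egrad \<Psi> y0 = x"
proof -
  obtain r where r: "r > 0" "cball y0 r \<subseteq> V" using open_interior y0 open_contains_cball by blast
  have Vsub: "V \<subseteq> edom \<Psi>" by (rule interior_subset)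
  have ccont: "continuous_on (cball y0 r) cf" using continuous_on_subset[OF conj_cont r(2)] .
  have ck: "compact (cball y0 r)" "cball y0 r \<noteq> {}" using r by auto
  obtain yM where yM: "\<And>y. y \<in> cball y0 r \<Longrightarrow> cf y \<le> cf yM"
    using continuous_attains_sup[OF ck ccont] by blast
  obtain ym where ym: "\<And>y. y \<in> cball y0 r \<Longrightarrow> cf ym \<le> cf y"
    using continuous_attains_inf[OF ck ccont] by blast
  define M where "M = cf yM"
  define m where "m = cf ym"
  have inE: "y \<in> edom \<Psi>" if "y \<in> cball y0 r" for y using that r Vsub by blast
  have coer: "r / 2 * norm x - M \<le> f x - x \<bullet> y" if y: "y \<in> cball y0 (r/2)" and x: "x \<in> edom \<Phi>" for x y
  proof (cases "x = 0")
    case True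
    have "y \<in> cball y0 r" using y r by auto
    then have "x \<bullet> y - f x \<le> M" using conj_ge[OF x inE] yM M_def by fastforce
    then show ?thesis using True by simp
  next
    case False
    define y' where "y' = y + (r / 2 / norm x) *\<^sub>R x"
    have "y' \<in> cball y0 (r/2 + r/2)"
      by (rule cball_tri[OF y]) (use r False in \<open>simp add: y'_def\<close>)
    then have y'K: "y' \<in> cball y0 r" by simp
    have "x \<bullet> y' - f x \<le> M" using conj_ge[OF x inE[OF y'K]] yM[OF y'K] M_def by simp
    moreover have "x \<bullet> y' = x \<bullet> y + r / 2 * norm x"
      using False by (simp add: y'_def inner_add_right power2_norm_eq_inner[symmetric] power2_eq_square)
    ultimately show ?thesis by simp
  qed
  have cylow: "m \<le> cf y" if "y \<in> cball y0 r" for y using ym[OF that] m_def by simp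
  have exmax: "\<exists>x\<in>edom \<Phi>. cf y = x \<bullet> y - f x" if y: "y \<in> cball y0 (r/2)" for y
  proof -
    have yE: "y \<in> edom \<Psi>" using y r by (intro inE) auto
    have "\<forall>n. \<exists>x. ereal (cf y - inverse (real (Suc n))) < ereal (x \<bullet> y) - \<Phi> x"
    proof
      fix n
      have "ereal (cf y - inverse (real (Suc n))) < \<Psi> y" using conj_fin[OF yE] by simp
      then show "\<exists>x. ereal (cf y - inverse (real (Suc n))) < ereal (x \<bullet> y) - \<Phi> x"
        by (rule conj_less)
    qed
    then obtain xs where xs0: "\<forall>n. ereal (cf y - inverse (real (Suc n))) < ereal (xs n \<bullet> y) - \<Phi> (xs n)"
      by (auto dest!: choice)
    have xs: "\<And>n. ereal (cf y - inverse (real (Suc n))) < ereal (xs n \<bullet> y) - \<Phi> (xs n)" using xs0 by blast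
    have xsE: "xs n \<in> edom \<Phi>" for n
    proof (rule ccontr)
      assume "xs n \<notin> edom \<Phi>"
      then have "\<Phi> (xs n) = \<infinity>" unfolding edom_def by simp
      then show False using xs[of n] by simp
    qed
    have xsl: "cf y - inverse (real (Suc n)) < xs n \<bullet> y - f (xs n)" for n
      using xs[of n] fin[OF xsE] by simp
    have bnd: "norm (xs n) \<le> 2 * (M - cf y + 1) / r" for n
    proof -
      have "r / 2 * norm (xs n) - M \<le> f (xs n) - xs n \<bullet> y" using coer[OF y xsE] .
      moreover have "inverse (real (Suc n)) \<le> 1" by (simp add: field_simps)
      ultimately have "r / 2 * norm (xs n) \<le> M - cf y + 1" using xsl[of n] by linarith
      then show ?thesis using r(1) by (simp add: field_simps)
    qed
    obtain l \<phi> where \<phi>: "strict_mono \<phi>" "(xs \<circ> \<phi>) \<longlonglongrightarrow> l" by (rule bounded_subseq[OF bnd])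
    have le: "\<Phi> ((xs \<circ> \<phi>) n) \<le> ereal ((xs \<circ> \<phi>) n \<bullet> y - cf y + inverse (real (Suc (\<phi> n))))" for n
      using xsl[of "\<phi> n"] fin[OF xsE[of "\<phi> n"]] by simp
    have "(\<lambda>n. inverse (real (Suc (\<phi> n)))) \<longlonglongrightarrow> 0"
      using LIMSEQ_subseq_LIMSEQ[OF LIMSEQ_inverse_real_of_nat \<phi>(1)] by (simp add: o_def)
    then have g: "(\<lambda>n. (xs \<circ> \<phi>) n \<bullet> y - cf y + inverse (real (Suc (\<phi> n)))) \<longlonglongrightarrow> l \<bullet> y - cf y + 0"
      by (intro tendsto_intros \<phi>(2))
    have "\<Phi> l \<le> ereal (l \<bullet> y - cf y + 0)" by (rule lsc_seq[OF \<phi>(2) le g])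
    then have lE: "l \<in> edom \<Phi>" unfolding edom_def using le_less_trans by fastforce
    have "f l \<le> l \<bullet> y - cf y" using \<open>\<Phi> l \<le> _\<close> fin[OF lE] by simp
    moreover have "l \<bullet> y - f l \<le> cf y" by (rule conj_ge[OF lE yE])
    ultimately show ?thesis using lE by (intro bexI[of _ l]) auto
  qed
  obtain xh where xh: "xh \<in> edom \<Phi>" "cf y0 = xh \<bullet> y0 - f xh" using exmax[of y0] r by auto
  have y0E: "y0 \<in> edom \<Psi>" using y0 Vsub by blast
  have xhp: "xh \<in> U" "G xh = y0" using max_props[OF y0E xh] by auto
  have close: "\<exists>d>0. d \<le> r/2 \<and> (\<forall>y x. norm (y - y0) < d \<longrightarrow> x \<in> edom \<Phi> \<longrightarrow> cf y = x \<bullet> y - f x \<longrightarrow> norm (x - xh) \<le> \<epsilon>)"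
    if eps: "\<epsilon> > 0" for \<epsilon>
  proof (rule ccontr)
    assume neg: "\<not> ?thesis"
    have A: "\<forall>n. \<exists>y x. norm (y - y0) < min (r/2) (inverse (real (Suc n))) \<and> x \<in> edom \<Phi> \<and> cf y = x \<bullet> y - f x \<and> \<not> norm (x - xh) \<le> \<epsilon>"
    proof
      fix n
      define d where "d = min (r/2) (inverse (real (Suc n)))"
      have d: "d > 0" "d \<le> r/2" using r(1) by (auto simp: d_def)
      then have "\<not> (\<forall>y x. norm (y - y0) < d \<longrightarrow> x \<in> edom \<Phi> \<longrightarrow> cf y = x \<bullet> y - f x \<longrightarrow> norm (x - xh) \<le> \<epsilon>)"
        using neg by blast
      then show "\<exists>y x. norm (y - y0) < min (r/2) (inverse (real (Suc n))) \<and> x \<in> edom \<Phi> \<and> cf y = x \<bullet> y - f x \<and> \<not> norm (x - xh) \<le> \<epsilon>"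
        unfolding d_def by blast
    qed
    obtain ys where ys0: "\<forall>n. \<exists>x. norm (ys n - y0) < min (r/2) (inverse (real (Suc n))) \<and> x \<in> edom \<Phi> \<and> cf (ys n) = x \<bullet> ys n - f x \<and> \<not> norm (x - xh) \<le> \<epsilon>"
      using choice[OF A] by (elim exE) (erule that)
    obtain xs where B: "\<forall>n. norm (ys n - y0) < min (r/2) (inverse (real (Suc n))) \<and> xs n \<in> edom \<Phi> \<and> cf (ys n) = xs n \<bullet> ys n - f (xs n) \<and> \<not> norm (xs n - xh) \<le> \<epsilon>"
      using choice[OF ys0] by (elim exE) (erule that)
    have yx: "\<And>n. norm (ys n - y0) < min (r/2) (inverse (real (Suc n)))"
      "\<And>n. xs n \<in> edom \<Phi>" "\<And>n. cf (ys n) = xs n \<bullet> ys n - f (xs n)" "\<And>n. \<not> norm (xs n - xh) \<le> \<epsilon>"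
      using B by auto
    have ysK: "ys n \<in> cball y0 (r/2)" for n using yx(1)[of n] by (simp add: dist_norm norm_minus_commute)
    have ysK2: "ys n \<in> cball y0 r" for n using ysK[of n] r by auto
    have nlim: "(\<lambda>n. norm (ys n - y0)) \<longlonglongrightarrow> 0"
    proof (rule tendsto_sandwich[of "\<lambda>n. 0" _ _ "\<lambda>n. inverse (real (Suc n))"])
      show "eventually (\<lambda>n. 0 \<le> norm (ys n - y0)) sequentially" by simp
      have "norm (ys n - y0) \<le> inverse (real (Suc n))" for n
        using yx(1)[of n] by simp
      then show "eventually (\<lambda>n. norm (ys n - y0) \<le> inverse (real (Suc n))) sequentially"
        by (intro always_eventually allI)
      show "(\<lambda>n. inverse (real (Suc n))) \<longlonglongrightarrow> 0" by (rule LIMSEQ_inverse_real_of_nat)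
    qed simp
    have "(\<lambda>n. ys n - y0) \<longlonglongrightarrow> 0" using nlim by (simp only: tendsto_norm_zero_iff)
    then have ylim: "ys \<longlonglongrightarrow> y0" by (rule LIM_zero_cancel)
    have bnd: "norm (xs n) \<le> 2 * (M - m) / r" for n
    proof -
      have "r / 2 * norm (xs n) - M \<le> f (xs n) - xs n \<bullet> ys n" using coer[OF ysK yx(2)] .
      moreover have "m \<le> cf (ys n)" using cylow[OF ysK2] .
      ultimately have "r / 2 * norm (xs n) \<le> M - m" using yx(3)[of n] by linarith
      then show ?thesis using r(1) by (simp add: field_simps)
    qed
    obtain l \<phi> where \<phi>: "strict_mono \<phi>" "(xs \<circ> \<phi>) \<longlonglongrightarrow> l" by (rule bounded_subseq[OF bnd])
    have ylim': "(ys \<circ> \<phi>) \<longlonglongrightarrow> y0" using LIMSEQ_subseq_LIMSEQ[OF ylim \<phi>(1)] .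
    have "isCont cf y0" using conj_cont y0 continuous_on_eq_continuous_at open_interior by blast
    then have clim: "(\<lambda>n. cf ((ys \<circ> \<phi>) n)) \<longlonglongrightarrow> cf y0" using ylim' isCont_tendsto_compose by blast
    have le: "\<Phi> ((xs \<circ> \<phi>) n) \<le> ereal ((xs \<circ> \<phi>) n \<bullet> (ys \<circ> \<phi>) n - cf ((ys \<circ> \<phi>) n))" for n
      using yx(3)[of "\<phi> n"] fin[OF yx(2)[of "\<phi> n"]] by simp
    have g: "(\<lambda>n. (xs \<circ> \<phi>) n \<bullet> (ys \<circ> \<phi>) n - cf ((ys \<circ> \<phi>) n)) \<longlonglongrightarrow> l \<bullet> y0 - cf y0"
      by (intro tendsto_intros \<phi>(2) ylim' clim)
    have "\<Phi> l \<le> ereal (l \<bullet> y0 - cf y0)" by (rule lsc_seq[OF \<phi>(2) le g])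
    then have lE: "l \<in> edom \<Phi>" unfolding edom_def using le_less_trans by fastforce
    have "f l \<le> l \<bullet> y0 - cf y0" using \<open>\<Phi> l \<le> _\<close> fin[OF lE] by simp
    moreover have "l \<bullet> y0 - f l \<le> cf y0" by (rule conj_ge[OF lE y0E])
    ultimately have "cf y0 = l \<bullet> y0 - f l" by simp
    then have "l = xh" using max_unique[OF y0E xh lE] by simp
    then have "eventually (\<lambda>n. dist ((xs \<circ> \<phi>) n) xh < \<epsilon>) sequentially" using \<phi>(2) eps tendstoD by blast
    then obtain n where "dist ((xs \<circ> \<phi>) n) xh < \<epsilon>" by (meson eventually_sequentially order_refl)
    then show False using yx(4)[of "\<phi> n"] by (simp add: dist_norm)
  qed
  have deriv: "(cf has_derivative (\<lambda>h. xh \<bullet> h)) (at y0)"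
    unfolding has_derivative_at_alt
  proof (intro conjI allI impI)
    show "bounded_linear ((\<bullet>) xh)" by (rule bounded_linear_inner_right)
    fix e :: real assume e: "e > 0"
    obtain d where d: "d > 0" "d \<le> r/2" "\<And>y x. norm (y - y0) < d \<Longrightarrow> x \<in> edom \<Phi> \<Longrightarrow> cf y = x \<bullet> y - f x \<Longrightarrow> norm (x - xh) \<le> e"
      using close[OF e] by blast
    show "\<exists>d>0. \<forall>y. norm (y - y0) < d \<longrightarrow> norm (cf y - cf y0 - xh \<bullet> (y - y0)) \<le> e * norm (y - y0)"
    proof (intro exI[of _ d] conjI allI impI)
      show "d > 0" by (rule d(1))
      fix y assume yd: "norm (y - y0) < d"
      then have yK: "y \<in> cball y0 (r/2)" using d(2) by (simp add: dist_norm norm_minus_commute)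
      have yE: "y \<in> edom \<Psi>" using yK r by (intro inE) auto
      obtain xy where xy: "xy \<in> edom \<Phi>" "cf y = xy \<bullet> y - f xy" using exmax[OF yK] by blast
      have low: "0 \<le> cf y - cf y0 - xh \<bullet> (y - y0)"
        using conj_ge[OF xh(1) yE] xh(2) by (simp add: inner_diff_right)
      have "cf y - cf y0 \<le> xy \<bullet> (y - y0)"
        using conj_ge[OF xy(1) y0E] xy(2) by (simp add: inner_diff_right)
      then have "cf y - cf y0 - xh \<bullet> (y - y0) \<le> (xy - xh) \<bullet> (y - y0)" by (simp add: inner_diff_left)
      also have "\<dots> \<le> norm (xy - xh) * norm (y - y0)" by (rule norm_cauchy_schwarz)
      also have "\<dots> \<le> e * norm (y - y0)" using d(3)[OF yd xy] by (simp add: mult_right_mono)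
      finally show "norm (cf y - cf y0 - xh \<bullet> (y - y0)) \<le> e * norm (y - y0)" using low by simp
    qed
  qed
  have "egrad \<Psi> y0 = xh"
  proof -
    have ex: "\<exists>g. (cf has_derivative (\<lambda>h. g \<bullet> h)) (at y0)" using deriv by blast
    define g0 where "g0 = egrad \<Psi> y0"
    have "(cf has_derivative (\<lambda>h. g0 \<bullet> h)) (at y0)"
      unfolding g0_def egrad_def grad_def by (rule someI_ex[OF ex])
    from has_derivative_unique[OF this deriv] have "(\<lambda>h. g0 \<bullet> h) = (\<lambda>h. xh \<bullet> h)" .
    from fun_cong[OF this, of "g0 - xh"] have "(g0 - xh) \<bullet> (g0 - xh) = 0" by (simp add: inner_diff_left)
    then show ?thesis unfolding g0_def by simp
  qed
  then show ?thesis using xhp by blast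
qed

end


lemma maxmono_closed:
  fixes T :: "'a::real_inner \<Rightarrow> 'a set"
  assumes mm: "maximal_monotone T" and ps: "ps \<longlonglongrightarrow> x" and ws: "\<And>n. ws n \<in> T (ps n)" and w0: "ws \<longlonglongrightarrow> 0"
  shows "0 \<in> T x"
proof -
  have mo: "monotone_op T" using mm unfolding maximal_monotone_def by simp
  have key: "0 \<le> (x - y) \<bullet> (0 - v)" if v: "v \<in> T y" for y v
  proof -
    have "(\<lambda>n. (ps n - y) \<bullet> (ws n - v)) \<longlonglongrightarrow> (x - y) \<bullet> (0 - v)"
      by (intro tendsto_intros ps w0)
    moreover have "\<forall>n\<ge>0. 0 \<le> (ps n - y) \<bullet> (ws n - v)"
      using mo ws v unfolding monotone_op_def by blast
    ultimately show ?thesis by (intro LIMSEQ_le_const) blast+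
  qed
  define S where "S = (\<lambda>y. if y = x then insert 0 (T x) else T y)"
  have Sd: "u \<in> S a \<Longrightarrow> u \<in> T a \<or> (a = x \<and> u = 0)" for u a
    unfolding S_def by (auto split: if_splits)
  have "monotone_op S"
    unfolding monotone_op_def
  proof (intro allI impI)
    fix a b u v assume u: "u \<in> S a" and v: "v \<in> S b"
    show "0 \<le> (a - b) \<bullet> (u - v)"
    proof (cases "u \<in> T a")
      case uT: True
      show ?thesis
      proof (cases "v \<in> T b")
        case True then show ?thesis using mo uT unfolding monotone_op_def by blast
      next
        case False
        then have "b = x" "v = 0" using Sd[OF v] by auto
        then show ?thesis using key[OF uT] by (simp add: inner_diff_left inner_diff_right)
      qed
    next
      case False
      then have ax: "a = x" "u = 0" using Sd[OF u] by auto
      show ?thesis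
      proof (cases "v \<in> T b")
        case True then show ?thesis using key[OF True] ax by simp
      next
        case False
        then have "b = x" "v = 0" using Sd[OF v] by auto
        then show ?thesis using ax by simp
      qed
    qed
  qed
  moreover have "\<forall>y. T y \<subseteq> S y" unfolding S_def by auto
  ultimately have "S = T" using mm unfolding maximal_monotone_def by blast
  then show ?thesis by (metis S_def insertI1)
qed

lemma small_lim:
  fixes a b :: "nat \<Rightarrow> real"
  assumes th: "0 < \<theta>" and E: "0 < E" and ev: "eventually (\<lambda>n. \<theta> / 2 * (min (a n) E)\<^sup>2 \<le> b n) sequentially"
    and b: "b \<longlonglongrightarrow> 0" and a: "\<And>n. 0 \<le> a n"
  shows "a \<longlonglongrightarrow> 0"
proof (rule tendstoI)
  fix \<epsilon> :: real assume eps: "\<epsilon> > 0"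
  define \<eta> where "\<eta> = min \<epsilon> E"
  have eta: "0 < \<eta>" "\<eta> \<le> \<epsilon>" "\<eta> \<le> E" using eps E by (auto simp: \<eta>_def)
  have "0 < \<theta> / 2 * \<eta>\<^sup>2" using th eta by simp
  from order_tendstoD(2)[OF b this] have "eventually (\<lambda>n. b n < \<theta> / 2 * \<eta>\<^sup>2) sequentially" by simp
  with ev have "eventually (\<lambda>n. \<theta> / 2 * (min (a n) E)\<^sup>2 < \<theta> / 2 * \<eta>\<^sup>2) sequentially"
    by eventually_elim simp
  then show "eventually (\<lambda>n. dist (a n) 0 < \<epsilon>) sequentially"
  proof eventually_elim
    case (elim n)
    then have "(min (a n) E)\<^sup>2 < \<eta>\<^sup>2" using th by simp
    then have "min (a n) E < \<eta>" using eta a[of n] E by (smt (verit) power_mono)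
    then have "a n < \<eta>" using eta by (auto simp: min_def split: if_splits)
    then show ?case using a[of n] eta by simp
  qed
qed



theorem mainTheorem7:
  fixes \<Phi> :: "'a::euclidean_space \<Rightarrow> ereal"
    and T :: "'a \<Rightarrow> 'a set"
    and \<sigma>s \<rho>s :: "nat \<Rightarrow> real" and \<sigma> \<rho> :: real
    and z p w :: "nat \<Rightarrow> 'a"
    and zstar :: 'a
  assumes leg: "legendre \<Phi>"
    and C2: "C2_int_dom \<Phi>"
    and vsc: "very_strictly_convex \<Phi>"
    and mm: "maximal_monotone T"
    and domT: "interior (edom \<Phi>) \<inter> dom_op T \<noteq> {}"
    and sigma: "\<sigma> > 0" "\<And>k. \<sigma>s k \<ge> \<sigma>"
    and rho: "\<And>k. 0 \<le> \<rho>s k" "\<And>k. \<rho>s k \<le> \<rho>" "\<rho> < 1"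
    and alg: "inexact_bppa \<Phi> T \<sigma>s \<rho>s z p w"
    and zer_int: "zer T \<inter> interior (edom \<Phi>) \<noteq> {}"
    and zstar: "zstar \<in> edom \<Phi> \<inter> zer T"
    and coer: "coercive (\<lambda>y. bregman \<Phi> zstar y)"
  shows "\<exists>zinf \<in> zer T \<inter> interior (edom \<Phi>). z \<longlonglongrightarrow> zinf \<and>
    (\<forall>\<delta> \<kappa>. error_bound T zinf \<delta> \<kappa> \<longrightarrow>
      (\<exists>\<epsilon>>0. cball zinf \<epsilon> \<subseteq> interior (edom \<Phi>) \<and>
        (\<exists>\<theta> \<Theta>. 0 < \<theta> \<and>
          (\<forall>a\<in>cball zinf \<epsilon>. \<forall>b\<in>cball zinf \<epsilon>.
             norm (egrad \<Phi> a - egrad \<Phi> b) \<le> \<Theta> * norm (a - b) \<and>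
             bregman \<Phi> a b \<ge> ereal (\<theta> / 2 * (norm (a - b))\<^sup>2)) \<and>
          (\<exists>k0. \<forall>k\<ge>k0.
             ereal (1 / ((sqrt (\<rho>s k) * sqrt \<Theta> / sqrt \<theta>
                        + \<kappa> / \<sigma>s k * \<Theta> * (1 + sqrt (\<rho>s k)))\<^sup>2 * (\<Theta> / \<theta>)))
               * bregman_dist \<Phi> (z (Suc k)) (zer T)
             \<le> bregman \<Phi> (p k) (z k)))))"
proof -
  interpret LF \<Phi> using leg C2 vsc by unfold_locales
  have zU: "z k \<in> U" for k
  proof (cases k)
    case 0 then show ?thesis using alg unfolding inexact_bppa_def by simp
  next
    case (Suc j)
    have "z (Suc j) \<in> U" using alg unfolding inexact_bppa_def by blast
    then show ?thesis using Suc by simp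
  qed
  have pE: "p k \<in> edom \<Phi>" and wT: "w k \<in> T (p k)" for k
    using alg unfolding inexact_bppa_def by auto
  have upd: "G (z (Suc k)) = G (z k) - \<sigma>s k *\<^sub>R w k" for k
  proof -
    have y0: "G (z k) - \<sigma>s k *\<^sub>R w k \<in> V" and zk: "z (Suc k) = egrad \<Psi> (G (z k) - \<sigma>s k *\<^sub>R w k)"
      using alg unfolding inexact_bppa_def by blast+
    obtain x where "x \<in> U" "G x = G (z k) - \<sigma>s k *\<^sub>R w k" "egrad \<Psi> (G (z k) - \<sigma>s k *\<^sub>R w k) = x"
      using conj_grad[OF y0] by blast
    then show ?thesis using zk by simp
  qed
  define e where "e = (\<lambda>k. D (p k) (z k))"
  define e' where "e' = (\<lambda>k. D (p k) (z (Suc k)))"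
  have e_nn: "0 \<le> e k" "0 \<le> e' k" for k unfolding e_def e'_def using D_nonneg pE zU by auto
  have e'_le: "e' k \<le> \<rho>s k * e k" for k
  proof -
    have "bregman \<Phi> (p k) (z (Suc k)) \<le> ereal (\<rho>s k) * bregman \<Phi> (p k) (z k)"
      using alg unfolding inexact_bppa_def by blast
    then show ?thesis using bregman_eq[OF pE zU] bregman_eq[OF pE zU] unfolding e_def e'_def by simp
  qed
  have sig_pos: "0 < \<sigma>s k" for k using sigma(1) sigma(2)[of k] by linarith
  have mo: "monotone_op T" using mm unfolding maximal_monotone_def by simp
  have fejer: "D x (z (Suc k)) \<le> D x (z k) - (1 - \<rho>) * e k" if x: "x \<in> zer T" "x \<in> edom \<Phi>" for x k
  proof -
    have "0 \<in> T x" using x unfolding zer_def by simp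
    then have m: "0 \<le> (x - p k) \<bullet> (0 - w k)" using mo wT unfolding monotone_op_def by blast
    have id: "D x (z (Suc k)) - D x (z k) - (e' k - e k) = (G (z k) - G (z (Suc k))) \<bullet> (x - p k)"
      unfolding D_def e_def e'_def by (simp add: inner_diff_left inner_diff_right algebra_simps)
    have "(G (z k) - G (z (Suc k))) \<bullet> (x - p k) = \<sigma>s k * (w k \<bullet> (x - p k))"
      using upd[of k] by simp
    also have "\<dots> \<le> 0" using m sig_pos[of k]
      by (simp add: inner_commute mult_nonneg_nonpos inner_diff_right)
    finally have "D x (z (Suc k)) \<le> D x (z k) + e' k - e k" using id by linarith
    also have "\<dots> \<le> D x (z k) - (1 - \<rho>s k) * e k" using e'_le[of k] by (simp add: algebra_simps)
    also have "\<dots> \<le> D x (z k) - (1 - \<rho>) * e k" using rho(2)[of k] e_nn[of k] by (simp add: mult_right_mono)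
    finally show ?thesis .
  qed
  have dec: "D x (z n) \<le> D x (z m)" if x: "x \<in> zer T" "x \<in> edom \<Phi>" and mn: "m \<le> n" for x m n
  proof -
    have "decseq (\<lambda>k. D x (z k))"
    proof (rule decseq_SucI)
      fix k show "D x (z (Suc k)) \<le> D x (z k)" using fejer[OF x, of k] e_nn[of k] rho(3)
        by (smt (verit) mult_nonneg_nonneg)
    qed
    then show ?thesis using mn unfolding decseq_def by blast
  qed
  have zsz: "zstar \<in> zer T" "zstar \<in> edom \<Phi>" using zstar by auto
  have psum: "(1 - \<rho>) * (\<Sum>k<n. e k) \<le> D zstar (z 0) - D zstar (z n)" for n
  proof (induction n)
    case 0 then show ?case by simp
  next
    case (Suc n)
    then show ?case using fejer[OF zsz, of n] by (simp add: algebra_simps)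
  qed
  have esum: "summable e"
  proof (rule summableI_nonneg_bounded[where x = "D zstar (z 0) / (1 - \<rho>)"])
    fix n
    have "(1 - \<rho>) * (\<Sum>k<n. e k) \<le> D zstar (z 0)" using psum[of n] D_nonneg[OF zsz(2) zU[of n]] by linarith
    then show "sum e {..<n} \<le> D zstar (z 0) / (1 - \<rho>)" using rho(3) by (simp add: field_simps)
  qed (use e_nn in auto)
  have e0: "e \<longlonglongrightarrow> 0" using summable_LIMSEQ_zero[OF esum] .
  have e'0: "e' \<longlonglongrightarrow> 0"
  proof (rule tendsto_sandwich[of "\<lambda>n. 0" _ _ "\<lambda>k. \<rho> * e k"])
    show "eventually (\<lambda>n. 0 \<le> e' n) sequentially" using e_nn by simp
    have "e' k \<le> \<rho> * e k" for k using e'_le[of k] rho(2)[of k] e_nn[of k] by (smt (verit) mult_right_mono)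
    then show "eventually (\<lambda>n. e' n \<le> \<rho> * e n) sequentially" by simp
    show "(\<lambda>k. \<rho> * e k) \<longlonglongrightarrow> 0" using tendsto_mult_right_zero[OF e0] by simp
  qed simp
  obtain R where R: "\<And>y. norm y \<ge> R \<Longrightarrow> bregman \<Phi> zstar y \<ge> ereal (D zstar (z 0) + 1)"
    using coer unfolding coercive_def by blast
  have zbnd: "norm (z k) \<le> R" for k
  proof (rule ccontr)
    assume "\<not> norm (z k) \<le> R"
    then have "bregman \<Phi> zstar (z k) \<ge> ereal (D zstar (z 0) + 1)" using R by simp
    moreover have "bregman \<Phi> zstar (z k) = ereal (D zstar (z k))" using bregman_eq[OF zsz(2) zU] .
    moreover have "D zstar (z k) \<le> D zstar (z 0)" using dec[OF zsz] by simp
    ultimately show False by simp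
  qed
  obtain x0 where x0: "x0 \<in> zer T" "x0 \<in> U" using zer_int by blast
  have x0E: "x0 \<in> edom \<Phi>" using x0 U_sub by blast
  obtain r0 M0 where r0: "r0 > 0" "\<And>y. y \<in> U \<Longrightarrow> f x0 - M0 + r0 * norm (G y) \<le> D x0 y"
    using blowup_bound[OF x0(2)] by blast
  have Gbnd: "norm (G (z k)) \<le> (D x0 (z 0) - f x0 + M0) / r0" for k
  proof -
    have "f x0 - M0 + r0 * norm (G (z k)) \<le> D x0 (z 0)" using r0(2)[OF zU[of k]] dec[OF x0(1) x0E, of 0 k] by simp
    then show ?thesis using r0(1) by (simp add: field_simps)
  qed
  obtain zb \<phi> where \<phi>: "strict_mono \<phi>" "(z \<circ> \<phi>) \<longlonglongrightarrow> zb" by (rule bounded_subseq[OF zbnd])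
  have zbU: "zb \<in> U" by (rule limit_in_U[OF _ \<phi>(2)]) (use zU Gbnd in auto)
  obtain e0 where e0pos: "e0 > 0" and K: "cball zb e0 \<subseteq> U" using open_U zbU open_contains_cball by blast
  obtain \<theta> \<Theta> where th: "0 < \<theta>" "\<theta> \<le> \<Theta>" and
    lq: "\<And>a b. a \<in> cball zb e0 \<Longrightarrow> b \<in> cball zb e0 \<Longrightarrow>
      norm (G a - G b) \<le> \<Theta> * norm (a - b) \<and> \<theta> / 2 * (norm (a - b))\<^sup>2 \<le> D a b \<and> D a b \<le> \<Theta> / 2 * (norm (a - b))\<^sup>2"
    using local_quad[OF e0pos K] by blast
  have quad: "\<theta> / 2 * (norm (a - b))\<^sup>2 \<le> D a b" if "a \<in> cball zb e0" "b \<in> cball zb e0" for a b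
    using lq[OF that] by blast
  have ev_ball: "eventually (\<lambda>n. xs n \<in> cball zb r) sequentially" if "xs \<longlonglongrightarrow> zb" "r > 0" for xs r
  proof -
    have "eventually (\<lambda>n. dist (xs n) zb < r) sequentially" using that tendstoD by blast
    then show ?thesis by eventually_elim (simp add: dist_commute)
  qed
  have half: "e0 / 2 > 0" using e0pos by simp
  have pz_phi: "(\<lambda>n. norm (p (\<phi> n) - z (\<phi> n))) \<longlonglongrightarrow> 0"
  proof (rule small_lim[OF th(1) half _ _ norm_ge_zero])
    show "eventually (\<lambda>n. \<theta> / 2 * (min (norm (p (\<phi> n) - z (\<phi> n))) (e0 / 2))\<^sup>2 \<le> (e \<circ> \<phi>) n) sequentially"
      using ev_ball[OF \<phi>(2) half]
    proof eventually_elim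
      case (elim n)
      then show ?case unfolding e_def o_def using far_first[OF e0pos K quad th(1) _ pE] by simp
    qed
    show "(e \<circ> \<phi>) \<longlonglongrightarrow> 0" using LIMSEQ_subseq_LIMSEQ[OF e0 \<phi>(1)] .
  qed
  have lim_from: "xs \<longlonglongrightarrow> zb" if "ys \<longlonglongrightarrow> zb" "(\<lambda>n. norm (xs n - ys n)) \<longlonglongrightarrow> 0" for xs ys :: "nat \<Rightarrow> 'a"
  proof -
    have "(\<lambda>n. xs n - ys n) \<longlonglongrightarrow> 0" using that(2) by (simp only: tendsto_norm_zero_iff)
    then have "(\<lambda>n. (xs n - ys n) + ys n) \<longlonglongrightarrow> 0 + zb" using that(1) by (intro tendsto_intros)
    then show ?thesis by simp
  qed
  have p_phi: "(p \<circ> \<phi>) \<longlonglongrightarrow> zb" by (rule lim_from[OF \<phi>(2)]) (use pz_phi in \<open>simp add: o_def\<close>)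
  have z1_phi: "(\<lambda>n. z (Suc (\<phi> n))) \<longlonglongrightarrow> zb"
  proof (rule lim_from[OF p_phi])
    have "(\<lambda>n. norm (p (\<phi> n) - z (Suc (\<phi> n)))) \<longlonglongrightarrow> 0"
    proof (rule small_lim[OF th(1) half _ _ norm_ge_zero])
      show "eventually (\<lambda>n. \<theta> / 2 * (min (norm (p (\<phi> n) - z (Suc (\<phi> n)))) (e0 / 2))\<^sup>2 \<le> (e' \<circ> \<phi>) n) sequentially"
        using ev_ball[OF p_phi half]
      proof eventually_elim
        case (elim n)
        then show ?case unfolding e'_def o_def using far_second[OF e0pos K quad th(1) _ zU] by simp
      qed
      show "(e' \<circ> \<phi>) \<longlonglongrightarrow> 0" using LIMSEQ_subseq_LIMSEQ[OF e'0 \<phi>(1)] .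
    qed
    then show "(\<lambda>n. norm (z (Suc (\<phi> n)) - (p \<circ> \<phi>) n)) \<longlonglongrightarrow> 0" by (simp add: norm_minus_commute o_def)
  qed
  have Gc: "isCont G zb" using G_cont zbU continuous_on_eq_continuous_at open_U by blast
  have wlim: "w k = (1 / \<sigma>s k) *\<^sub>R (G (z k) - G (z (Suc k)))" for k
  proof -
    have "G (z k) - G (z (Suc k)) = \<sigma>s k *\<^sub>R w k" using upd[of k] by simp
    then show ?thesis using sig_pos[of k] by simp
  qed
  have wbound: "norm (w k) \<le> norm (G (z k) - G (z (Suc k))) / \<sigma>" for k
  proof -
    have "norm (w k) = norm (G (z k) - G (z (Suc k))) / \<sigma>s k" using wlim[of k] sig_pos[of k] by simp
    also have "\<dots> \<le> norm (G (z k) - G (z (Suc k))) / \<sigma>" using sigma sig_pos[of k] by (simp add: frac_le)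
    finally show ?thesis .
  qed
  have w_small: "(\<lambda>n. w (\<psi> n)) \<longlonglongrightarrow> 0" if "(z \<circ> \<psi>) \<longlonglongrightarrow> zb" "(\<lambda>n. z (Suc (\<psi> n))) \<longlonglongrightarrow> zb" for \<psi>
  proof -
    have "(\<lambda>n. G (z (\<psi> n))) \<longlonglongrightarrow> G zb" using isCont_tendsto_compose[OF Gc that(1)] by (simp add: o_def)
    moreover have "(\<lambda>n. G (z (Suc (\<psi> n)))) \<longlonglongrightarrow> G zb" using isCont_tendsto_compose[OF Gc that(2)] .
    ultimately have "(\<lambda>n. norm (G (z (\<psi> n)) - G (z (Suc (\<psi> n)))) / \<sigma>) \<longlonglongrightarrow> norm (G zb - G zb) / \<sigma>"
      using sigma(1) by (intro tendsto_intros) auto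
    then have a: "(\<lambda>n. norm (G (z (\<psi> n)) - G (z (Suc (\<psi> n)))) / \<sigma>) \<longlonglongrightarrow> 0" by simp
    have "(\<lambda>n. norm (w (\<psi> n))) \<longlonglongrightarrow> 0"
      by (rule tendsto_sandwich[OF _ _ tendsto_const a]) (use wbound in auto)
    then show ?thesis by (simp only: tendsto_norm_zero_iff)
  qed
  have zb_zer: "zb \<in> zer T"
  proof -
    have "0 \<in> T zb" by (rule maxmono_closed[OF mm p_phi, of "w \<circ> \<phi>"]) (use wT w_small[OF \<phi>(2) z1_phi] in \<open>auto simp: o_def\<close>)
    then show ?thesis unfolding zer_def by simp
  qed
  have zbE: "zb \<in> edom \<Phi>" using zbU U_sub by blast
  have Dphi: "(\<lambda>n. D zb (z (\<phi> n))) \<longlonglongrightarrow> 0"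
  proof (rule tendsto_sandwich[of "\<lambda>n. 0" _ _ "\<lambda>n. \<Theta> / 2 * (norm (zb - z (\<phi> n)))\<^sup>2"])
    show "eventually (\<lambda>n. 0 \<le> D zb (z (\<phi> n))) sequentially" using D_nonneg[OF zbE zU] by simp
    show "eventually (\<lambda>n. D zb (z (\<phi> n)) \<le> \<Theta> / 2 * (norm (zb - z (\<phi> n)))\<^sup>2) sequentially"
      using ev_ball[OF \<phi>(2) e0pos]
    proof eventually_elim
      case (elim n) then show ?case using lq[of zb "z (\<phi> n)"] e0pos by (simp add: o_def)
    qed
    have zp: "(\<lambda>n. z (\<phi> n)) \<longlonglongrightarrow> zb" using \<phi>(2) by (simp add: o_def)
    have "(\<lambda>n. \<Theta> / 2 * (norm (zb - z (\<phi> n)))\<^sup>2) \<longlonglongrightarrow> \<Theta> / 2 * (norm (zb - zb))\<^sup>2"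
      by (intro tendsto_intros zp)
    then show "(\<lambda>n. \<Theta> / 2 * (norm (zb - z (\<phi> n)))\<^sup>2) \<longlonglongrightarrow> 0" by simp
  qed simp
  have Dlim: "(\<lambda>k. D zb (z k)) \<longlonglongrightarrow> 0"
  proof (rule tendstoI)
    fix \<epsilon> :: real assume eps: "\<epsilon> > 0"
    obtain N where N: "\<And>n. n \<ge> N \<Longrightarrow> dist (D zb (z (\<phi> n))) 0 < \<epsilon>"
      using tendstoD[OF Dphi eps] unfolding eventually_sequentially by blast
    show "eventually (\<lambda>k. dist (D zb (z k)) 0 < \<epsilon>) sequentially"
      unfolding eventually_sequentially
    proof (intro exI[of _ "\<phi> N"] allI impI)
      fix k assume k: "\<phi> N \<le> k"
      have "D zb (z k) \<le> D zb (z (\<phi> N))" by (rule dec[OF zb_zer zbE k])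
      moreover have "D zb (z (\<phi> N)) < \<epsilon>" using N[of N] by simp
      ultimately show "dist (D zb (z k)) 0 < \<epsilon>" using D_nonneg[OF zbE zU] by simp
    qed
  qed
  have zlim: "z \<longlonglongrightarrow> zb"
  proof -
    have "(\<lambda>k. norm (zb - z k)) \<longlonglongrightarrow> 0"
    proof (rule small_lim[OF th(1) half _ Dlim norm_ge_zero])
      show "eventually (\<lambda>k. \<theta> / 2 * (min (norm (zb - z k)) (e0 / 2))\<^sup>2 \<le> D zb (z k)) sequentially"
        using far_second[OF e0pos K quad th(1) _ zU, of zb] e0pos by simp
    qed
    then have "(\<lambda>k. norm (z k - zb)) \<longlonglongrightarrow> 0" by (simp add: norm_minus_commute)
    then show ?thesis using lim_from[of "\<lambda>k. zb" z] by simp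
  qed
  have pz: "(\<lambda>k. norm (p k - z k)) \<longlonglongrightarrow> 0"
  proof (rule small_lim[OF th(1) half _ e0 norm_ge_zero])
    show "eventually (\<lambda>k. \<theta> / 2 * (min (norm (p k - z k)) (e0 / 2))\<^sup>2 \<le> e k) sequentially"
      using ev_ball[OF zlim half]
    proof eventually_elim
      case (elim k)
      then show ?case unfolding e_def using far_first[OF e0pos K quad th(1) _ pE] by simp
    qed
  qed
  have plim: "p \<longlonglongrightarrow> zb" by (rule lim_from[OF zlim pz])
  have z1lim: "(\<lambda>k. z (Suc k)) \<longlonglongrightarrow> zb" using LIMSEQ_Suc[OF zlim] .
  have wlim0: "w \<longlonglongrightarrow> 0" using w_small[of id] zlim z1lim by simp
  have zer_closed: "closed (zer T)"
    unfolding closed_sequential_limits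
  proof (intro allI impI)
    fix xs l assume h: "(\<forall>n. xs n \<in> zer T) \<and> xs \<longlonglongrightarrow> l"
    have "0 \<in> T l" by (rule maxmono_closed[OF mm _ _ tendsto_const, of xs]) (use h in \<open>auto simp: zer_def\<close>)
    then show "l \<in> zer T" unfolding zer_def by simp
  qed
  show ?thesis
  proof (intro bexI[of _ zb] conjI allI impI)
    show "z \<longlonglongrightarrow> zb" by (rule zlim)
    show "zb \<in> zer T \<inter> U" using zb_zer zbU by simp
    fix \<delta> \<kappa> assume eb: "error_bound T zb \<delta> \<kappa>"
    have dk: "\<delta> > 0" "\<kappa> > 0" using eb unfolding error_bound_def by auto
    have EB: "\<And>zz ww. ww \<in> T zz \<Longrightarrow> norm (zz - zb) \<le> \<delta> \<Longrightarrow> norm ww \<le> \<delta> \<Longrightarrow> infdist zz (zer T) \<le> \<kappa> * norm ww"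
      using eb unfolding error_bound_def by blast
    show "\<exists>\<epsilon>>0. cball zb \<epsilon> \<subseteq> U \<and>
        (\<exists>\<theta> \<Theta>. 0 < \<theta> \<and>
          (\<forall>a\<in>cball zb \<epsilon>. \<forall>b\<in>cball zb \<epsilon>.
             norm (G a - G b) \<le> \<Theta> * norm (a - b) \<and>
             bregman \<Phi> a b \<ge> ereal (\<theta> / 2 * (norm (a - b))\<^sup>2)) \<and>
          (\<exists>k0. \<forall>k\<ge>k0.
             ereal (1 / ((sqrt (\<rho>s k) * sqrt \<Theta> / sqrt \<theta>
                        + \<kappa> / \<sigma>s k * \<Theta> * (1 + sqrt (\<rho>s k)))\<^sup>2 * (\<Theta> / \<theta>)))
               * bregman_dist \<Phi> (z (Suc k)) (zer T)
             \<le> bregman \<Phi> (p k) (z k)))"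
    proof (rule exI[of _ e0], rule conjI[OF e0pos], rule conjI[OF K], rule exI[of _ \<theta>], rule exI[of _ \<Theta>], intro conjI ballI)
      show "0 < \<theta>" using th by auto
    next
      fix a b assume ab: "a \<in> cball zb e0" "b \<in> cball zb e0"
      show "norm (G a - G b) \<le> \<Theta> * norm (a - b)" using lq[OF ab] by blast
    next
      fix a b assume ab: "a \<in> cball zb e0" "b \<in> cball zb e0"
      have "a \<in> edom \<Phi>" "b \<in> U" using ab K U_sub by auto
      then show "bregman \<Phi> a b \<ge> ereal (\<theta> / 2 * (norm (a - b))\<^sup>2)"
        using bregman_eq lq[OF ab] by simp
    next
      have ev1: "eventually (\<lambda>k. z k \<in> cball zb e0) sequentially" by (rule ev_ball[OF zlim e0pos])
      have ev2: "eventually (\<lambda>k. z (Suc k) \<in> cball zb e0) sequentially" by (rule ev_ball[OF z1lim e0pos])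
      have ev3: "eventually (\<lambda>k. p k \<in> cball zb (e0/2)) sequentially" by (rule ev_ball[OF plim half])
      have ev4: "eventually (\<lambda>k. p k \<in> cball zb \<delta>) sequentially" by (rule ev_ball[OF plim dk(1)])
      have ev5: "eventually (\<lambda>k. dist (w k) 0 < \<delta>) sequentially" by (rule tendstoD[OF wlim0 dk(1)])
      have "eventually (\<lambda>k. z k \<in> cball zb e0 \<and> z (Suc k) \<in> cball zb e0 \<and> p k \<in> cball zb (e0/2) \<and> p k \<in> cball zb \<delta> \<and> dist (w k) 0 < \<delta>) sequentially"
        using ev1 ev2 ev3 ev4 ev5 by eventually_elim blast
      then obtain k0 where k0: "\<And>k. k \<ge> k0 \<Longrightarrow> z k \<in> cball zb e0 \<and> z (Suc k) \<in> cball zb e0 \<and> p k \<in> cball zb (e0/2) \<and> p k \<in> cball zb \<delta> \<and> dist (w k) 0 < \<delta>"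
        unfolding eventually_sequentially by blast
      show "\<exists>k0. \<forall>k\<ge>k0.
             ereal (1 / ((sqrt (\<rho>s k) * sqrt \<Theta> / sqrt \<theta>
                        + \<kappa> / \<sigma>s k * \<Theta> * (1 + sqrt (\<rho>s k)))\<^sup>2 * (\<Theta> / \<theta>)))
               * bregman_dist \<Phi> (z (Suc k)) (zer T)
             \<le> bregman \<Phi> (p k) (z k)"
      proof (intro exI[of _ k0] allI impI)
        fix k assume kk: "k \<ge> k0"
        note kf = k0[OF kk]
        define A where "A = sqrt (\<rho>s k) * sqrt \<Theta> / sqrt \<theta> + \<kappa> / \<sigma>s k * \<Theta> * (1 + sqrt (\<rho>s k))"
        define C where "C = A\<^sup>2 * (\<Theta> / \<theta>)"
        have Theta_pos: "\<Theta> > 0" using th by linarith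
        have A_pos: "A > 0" unfolding A_def using dk Theta_pos sig_pos[of k] th rho(1)[of k]
          by (intro add_nonneg_pos) (auto intro!: mult_pos_pos divide_pos_pos add_pos_nonneg)
        have C_pos: "C > 0" unfolding C_def using A_pos th Theta_pos by simp
        have zkK: "z k \<in> cball zb e0" and z1K: "z (Suc k) \<in> cball zb e0" and pK2: "p k \<in> cball zb (e0/2)"
          and pd: "norm (p k - zb) \<le> \<delta>" and wd: "norm (w k) \<le> \<delta>"
          using kf by (auto simp: dist_norm norm_minus_commute)
        have pK: "p k \<in> cball zb e0" using pK2 e0pos by auto
        have inf: "infdist (p k) (zer T) \<le> \<kappa> * norm (w k)" by (rule EB[OF wT pd wd])
        have zne: "zer T \<noteq> {}" using zb_zer by blast
        obtain xb where xb: "xb \<in> zer T" "\<And>y. y \<in> zer T \<Longrightarrow> dist (p k) xb \<le> dist (p k) y"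
          using distance_attains_inf[OF zer_closed zne] by blast
        have "dist (p k) xb \<le> infdist (p k) (zer T)"
          unfolding infdist_def using zne xb(2) by (simp add: cINF_greatest)
        then have nxp: "norm (xb - p k) \<le> \<kappa> * norm (w k)" using inf by (simp add: dist_norm norm_minus_commute)
        have "dist (p k) xb \<le> dist (p k) zb" by (rule xb(2)[OF zb_zer])
        then have "xb \<in> cball zb (e0/2 + e0/2)" using pK2 by (intro cball_tri[OF pK2]) (simp add: dist_norm norm_minus_commute)
        then have xbK: "xb \<in> cball zb e0" by simp
        define a where "a = norm (p k - z k)"
        define b where "b = norm (p k - z (Suc k))"
        define s where "s = sqrt (2 * e k / \<theta>)"
        have ab0: "0 \<le> a" "0 \<le> b" unfolding a_def b_def by auto
        have "\<theta> / 2 * a\<^sup>2 \<le> e k" unfolding a_def e_def by (rule quad[OF pK zkK])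
        then have "a\<^sup>2 \<le> 2 * e k / \<theta>" using th by (simp add: field_simps)
        then have a_le: "a \<le> s" unfolding s_def by (rule real_le_rsqrt)
        have "\<theta> / 2 * b\<^sup>2 \<le> e' k" unfolding b_def e'_def by (rule quad[OF pK z1K])
        then have "\<theta> / 2 * b\<^sup>2 \<le> \<rho>s k * e k" using e'_le[of k] by linarith
        then have "b\<^sup>2 \<le> \<rho>s k * (2 * e k / \<theta>)" using th by (simp add: field_simps)
        then have "b \<le> sqrt (\<rho>s k * (2 * e k / \<theta>))" by (rule real_le_rsqrt)
        moreover have "sqrt (\<rho>s k * (2 * e k / \<theta>)) = sqrt (\<rho>s k) * s" unfolding s_def by (rule real_sqrt_mult)
        ultimately have b_le: "b \<le> sqrt (\<rho>s k) * s" by simp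
        have s0: "0 \<le> s" unfolding s_def using e_nn[of k] th by simp
        have "norm (G (z k) - G (z (Suc k))) \<le> \<Theta> * norm (z k - z (Suc k))" using lq[OF zkK z1K] by blast
        also have "norm (z k - z (Suc k)) \<le> a + b" unfolding a_def b_def
          using norm_triangle_ineq[of "z k - p k" "p k - z (Suc k)"] by (simp add: norm_minus_commute)
        then have "\<Theta> * norm (z k - z (Suc k)) \<le> \<Theta> * (a + b)" using Theta_pos by simp
        finally have Gd: "norm (G (z k) - G (z (Suc k))) \<le> \<Theta> * (a + b)" .
        have "norm (w k) = norm (G (z k) - G (z (Suc k))) / \<sigma>s k" using wlim[of k] sig_pos[of k] by simp
        also have "\<dots> \<le> \<Theta> * (a + b) / \<sigma>s k" using Gd sig_pos[of k] by (simp add: divide_right_mono)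
        also have "\<dots> \<le> \<Theta> * (s + sqrt (\<rho>s k) * s) / \<sigma>s k"
          using a_le b_le Theta_pos sig_pos[of k] by (intro divide_right_mono mult_left_mono add_mono) auto
        finally have wle: "norm (w k) \<le> \<Theta> * (1 + sqrt (\<rho>s k)) * s / \<sigma>s k" by (simp add: algebra_simps)
        have ratio: "1 \<le> sqrt \<Theta> / sqrt \<theta>" using th by (simp add: real_sqrt_le_mono)
        have "norm (xb - z (Suc k)) \<le> norm (xb - p k) + b" unfolding b_def
          using norm_triangle_ineq[of "xb - p k" "p k - z (Suc k)"] by simp
        also have "\<dots> \<le> \<kappa> * (\<Theta> * (1 + sqrt (\<rho>s k)) * s / \<sigma>s k) + sqrt (\<rho>s k) * s"
          using nxp wle b_le dk by (intro add_mono order.trans[OF nxp] mult_left_mono) auto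
        also have "\<dots> \<le> \<kappa> * (\<Theta> * (1 + sqrt (\<rho>s k)) * s / \<sigma>s k) + sqrt (\<rho>s k) * (sqrt \<Theta> / sqrt \<theta>) * s"
        proof -
          have "sqrt (\<rho>s k) * 1 \<le> sqrt (\<rho>s k) * (sqrt \<Theta> / sqrt \<theta>)" using ratio rho(1)[of k] by (intro mult_left_mono) auto
          then have "sqrt (\<rho>s k) * s \<le> sqrt (\<rho>s k) * (sqrt \<Theta> / sqrt \<theta>) * s"
            using mult_right_mono[OF _ s0, of "sqrt (\<rho>s k)" "sqrt (\<rho>s k) * (sqrt \<Theta> / sqrt \<theta>)"] by simp
          then show ?thesis by simp
        qed
        also have "\<dots> = A * s" unfolding A_def by (simp add: algebra_simps)
        finally have xz: "norm (xb - z (Suc k)) \<le> A * s" .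
        have "D xb (z (Suc k)) \<le> \<Theta> / 2 * (norm (xb - z (Suc k)))\<^sup>2" using lq[OF xbK z1K] by blast
        also have "\<dots> \<le> \<Theta> / 2 * (A * s)\<^sup>2" using xz Theta_pos by (intro mult_left_mono power_mono) auto
        also have "\<dots> = \<Theta> / 2 * A\<^sup>2 * (2 * e k / \<theta>)" unfolding s_def using e_nn[of k] th
          by (simp add: power_mult_distrib)
        also have "\<dots> = C * e k" unfolding C_def using th by (simp add: field_simps)
        finally have Dle: "D xb (z (Suc k)) \<le> C * e k" .
        have xbE: "xb \<in> edom \<Phi>" using xbK K U_sub by blast
        have "bregman_dist \<Phi> (z (Suc k)) (zer T) \<le> bregman \<Phi> xb (z (Suc k))"
          unfolding bregman_dist_def by (rule INF_lower[OF xb(1)])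
        also have "\<dots> = ereal (D xb (z (Suc k)))" by (rule bregman_eq[OF xbE zU])
        also have "\<dots> \<le> ereal (C * e k)" using Dle by simp
        finally have bd: "bregman_dist \<Phi> (z (Suc k)) (zer T) \<le> ereal (C * e k)" .
        have "ereal (1 / C) * bregman_dist \<Phi> (z (Suc k)) (zer T) \<le> ereal (1 / C) * ereal (C * e k)"
          by (rule ereal_mult_left_mono[OF bd]) (use C_pos in simp)
        also have "\<dots> = ereal (e k)" using C_pos by simp
        also have "\<dots> = bregman \<Phi> (p k) (z k)" unfolding e_def using bregman_eq[OF pE zU] by simp
        finally show "ereal (1 / ((sqrt (\<rho>s k) * sqrt \<Theta> / sqrt \<theta>
                        + \<kappa> / \<sigma>s k * \<Theta> * (1 + sqrt (\<rho>s k)))\<^sup>2 * (\<Theta> / \<theta>)))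
               * bregman_dist \<Phi> (z (Suc k)) (zer T)
             \<le> bregman \<Phi> (p k) (z k)" unfolding C_def A_def .
      qed
    qed
  qed
qed


end
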